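(* Let $k\ge3$ and $\frac1k<r_0<\frac1{k-1}$. Every $k$-hop path $0=v_0,v_1,\dots,v_k=1$ in $G$ satisfies $v_j\in L_j$ for $j=1,\dots,k-1$. For a point $x\in\mathcal P_\lambda\cap L_j$, define its offset $y(x)=x-(1-(k-j)r_0)$. Let $W$ be the random word obtained by listing the points of $\mathcal P_\lambda\cap(L_1\cup\dots\cup L_{k-1})$ in decreasing order of offset, and writing the letter $e_j$ for each point of $L_j$. Then, conditionally on $(m_1,\dots,m_{k-1})$, $W$ is almost surely well defined and uniformly distributed on $\mathcal P(\mathcal M_{k-1})$. Moreover, almost surely $\sigma_k$ equals the number of $(k-1)$-tuples of positions $p_1<p_2<\dots<p_{k-1}$ in $W$ such that the letter at $p_j$ is $e_j$ for all $j$. Equivalently, $\sigma_k=\sum_{s=1}^{m_{k-1}}S_{\pi_{k-2,k-1}(W)(s)}(W')$, where $W'$ is the word obtained from $W$ by deleting all letters $e_{k-1}$.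
   Context: Fix $\lambda>0$. Let $\mathcal P_\lambda$ be a homogeneous Poisson point process of intensity $\lambda$ on $[0,1]$. Set $V=\mathcal P_\lambda\cup\{0,1\}$ and let $G$ be the graph on $V$ in which distinct $x,y$ are adjacent iff $|x-y|<r_0$. A $k$-hop path from $0$ to $1$ is a sequence of vertices $0=v_0,\dots,v_k=1$ of $G$ with consecutive vertices adjacent. $\sigma_k$ is the number of such paths. For $j=1,\dots,k-1$, the lens is $L_j=(1-(k-j)r_0,\; j r_0)$, and $m_j=\#(\mathcal P_\lambda\cap L_j)$. $\mathcal P(\mathcal M_d)$ is the set of words of length $m_1+\dots+m_d$ in letters $e_1,\dots,e_d$ with exactly $m_i$ copies of $e_i$. For a word $w$ and $i\ne j$, $\pi_{i,j}(w)(s)$ is the number of occurrences of $e_i$ preceding the $s$-th occurrence of $e_j$. For $w\in\mathcal P(\mathcal M_d)$ and $0\le t\le m_d$, $S_t(w)$ is the number of position tuples $p_1<\dots<p_d$ in $w$ with letter $e_i$ at $p_i$ for each $i$, and $p_d$ at or before the $t$-th occurrence of $e_d$. *)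

theory Defs
  imports "HOL-Probability.Probability"
begin

text \<open>Sample space: a Poisson(lam) number N of points, together with an
  independent i.i.d. sequence of uniform points on [0,1]; the Poisson process
  is the set of the first N points.\<close>

definition PPP :: "real \<Rightarrow> (nat \<times> (nat \<Rightarrow> real)) measure" where
  "PPP lam = measure_pmf (poisson_pmf lam) \<Otimes>\<^sub>M
             (\<Pi>\<^sub>M i\<in>(UNIV::nat set). uniform_measure lborel {0..1::real})"

definition pts :: "nat \<times> (nat \<Rightarrow> real) \<Rightarrow> real set" where
  "pts \<omega> = snd \<omega> ` {..<fst \<omega>}"

definition verts :: "nat \<times> (nat \<Rightarrow> real) \<Rightarrow> real set" where
  "verts \<omega> = pts \<omega> \<union> {0, 1}"

definition adj :: "real \<Rightarrow> real \<Rightarrow> real \<Rightarrow> bool" where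
  "adj r0 x y \<longleftrightarrow> x \<noteq> y \<and> \<bar>x - y\<bar> < r0"

definition khop_paths :: "real \<Rightarrow> nat \<Rightarrow> nat \<times> (nat \<Rightarrow> real) \<Rightarrow> real list set" where
  "khop_paths r0 k \<omega> = {vs. length vs = Suc k \<and> vs ! 0 = 0 \<and> vs ! k = 1 \<and>
      set vs \<subseteq> verts \<omega> \<and> (\<forall>i<k. adj r0 (vs ! i) (vs ! Suc i))}"

definition sigma :: "real \<Rightarrow> nat \<Rightarrow> nat \<times> (nat \<Rightarrow> real) \<Rightarrow> nat" where
  "sigma r0 k \<omega> = card (khop_paths r0 k \<omega>)"

definition lens :: "real \<Rightarrow> nat \<Rightarrow> nat \<Rightarrow> real set" where
  "lens r0 k j = {1 - real (k - j) * r0 <..< real j * r0}"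

definition mcount :: "real \<Rightarrow> nat \<Rightarrow> nat \<Rightarrow> nat \<times> (nat \<Rightarrow> real) \<Rightarrow> nat" where
  "mcount r0 k j \<omega> = card (pts \<omega> \<inter> lens r0 k j)"

text \<open>Letters e_j are encoded as the natural numbers j.\<close>

definition lensidx :: "real \<Rightarrow> nat \<Rightarrow> real \<Rightarrow> nat" where
  "lensidx r0 k x = (THE j. j \<in> {1..k-1} \<and> x \<in> lens r0 k j)"

definition offset :: "real \<Rightarrow> nat \<Rightarrow> real \<Rightarrow> real" where
  "offset r0 k x = x - (1 - real (k - lensidx r0 k x) * r0)"

definition lens_pts :: "real \<Rightarrow> nat \<Rightarrow> nat \<times> (nat \<Rightarrow> real) \<Rightarrow> real set" where
  "lens_pts r0 k \<omega> = pts \<omega> \<inter> (\<Union>j\<in>{1..k-1}. lens r0 k j)"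

definition W_welldef :: "real \<Rightarrow> nat \<Rightarrow> nat \<times> (nat \<Rightarrow> real) \<Rightarrow> bool" where
  "W_welldef r0 k \<omega> \<longleftrightarrow> inj_on (offset r0 k) (lens_pts r0 k \<omega>)"

definition Wword :: "real \<Rightarrow> nat \<Rightarrow> nat \<times> (nat \<Rightarrow> real) \<Rightarrow> nat list" where
  "Wword r0 k \<omega> = map (lensidx r0 k)
     (sort_key (\<lambda>x. - offset r0 k x) (sorted_list_of_set (lens_pts r0 k \<omega>)))"

text \<open>P(M_d): words in letters 1..d with exactly M i copies of letter i.\<close>
definition words :: "(nat \<Rightarrow> nat) \<Rightarrow> nat \<Rightarrow> nat list set" where
  "words M d = {w. set w \<subseteq> {1..d} \<and> (\<forall>i\<in>{1..d}. count_list w i = M i)}"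

text \<open>Position (0-based) of the s-th occurrence (s \<ge> 1) of letter a in w.\<close>
definition occ_pos :: "nat list \<Rightarrow> nat \<Rightarrow> nat \<Rightarrow> nat" where
  "occ_pos w a s = filter (\<lambda>i. w ! i = a) [0..<length w] ! (s - 1)"

definition pi_ij :: "nat \<Rightarrow> nat \<Rightarrow> nat list \<Rightarrow> nat \<Rightarrow> nat" where
  "pi_ij i j w s = count_list (take (occ_pos w j s) w) i"

text \<open>Position tuples p_1 < ... < p_d with letter e_i at p_i (stored 0-based
  as a list p with p!(i-1) = p_i).\<close>
definition emb_tuples :: "nat list \<Rightarrow> nat \<Rightarrow> nat list set" where
  "emb_tuples w d = {p. length p = d \<and> sorted_wrt (<) p \<and>
      (\<forall>i<d. p ! i < length w \<and> w ! (p ! i) = Suc i)}"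

definition S_t :: "nat \<Rightarrow> nat \<Rightarrow> nat list \<Rightarrow> nat" where
  "S_t d t w = card {p \<in> emb_tuples w d. 1 \<le> t \<and> t \<le> count_list w d \<and>
                                          p ! (d - 1) \<le> occ_pos w d t}"

end

theory Submission
  imports Defs
begin

locale hop =
  fixes r0 :: real and k :: nat
  assumes k3: "k \<ge> 3" and rlo: "1 / real k < r0" and rhi: "r0 < 1 / real (k - 1)"
begin

definition a :: "nat \<Rightarrow> real" where "a j = 1 - real (k - j) * r0"
definition \<delta> :: real where "\<delta> = real k * r0 - 1"

lemma r0_pos: "r0 > 0"
  using rlo k3 by (smt (verit) divide_pos_pos of_nat_0_less_iff less_le_trans numeral_less_iff zero_less_numeral)

lemma kr0: "real k * r0 > 1"
  using rlo k3 by (simp add: field_simps)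

lemma k1r0: "real (k - 1) * r0 < 1"
  using rhi k3 by (simp add: field_simps)

lemma k1r0': "(real k - 1) * r0 < 1"
  using k1r0 k3 by (simp add: of_nat_diff)

lemma delta_pos: "\<delta> > 0" using kr0 by (simp add: \<delta>_def)
lemma delta_lt: "\<delta> < r0" using k1r0' by (simp add: \<delta>_def algebra_simps)

lemma lens_eq: "j \<le> k \<Longrightarrow> lens r0 k j = {a j <..< a j + \<delta>}"
  by (simp add: lens_def a_def \<delta>_def of_nat_diff algebra_simps)

lemma a_ge: "j \<ge> 1 \<Longrightarrow> j \<le> k \<Longrightarrow> a j > 0"
proof -
  assume "j \<ge> 1" "j \<le> k"
  then have "real (k - j) \<le> real (k - 1)" by simp
  then have "real (k - j) * r0 \<le> real (k - 1) * r0" using r0_pos by (simp add: mult_right_mono)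
  then show ?thesis using k1r0 by (simp add: a_def)
qed

lemma lens_sub01: "j \<in> {1..k-1} \<Longrightarrow> x \<in> lens r0 k j \<Longrightarrow> 0 < x \<and> x < 1"
proof -
  assume j: "j \<in> {1..k-1}" and x: "x \<in> lens r0 k j"
  have "real j * r0 \<le> real (k-1) * r0" using j r0_pos by (simp add: mult_right_mono)
  with k1r0 x have "x < 1" by (simp add: lens_def)
  moreover have "a j < x" using x j by (simp add: lens_def a_def)
  moreover have "j \<le> k" "1 \<le> j" using j by auto
  ultimately show ?thesis using a_ge[of j] by auto
qed

lemma lens_disj: "j \<in> {1..k-1} \<Longrightarrow> j' \<in> {1..k-1} \<Longrightarrow> x \<in> lens r0 k j \<Longrightarrow> x \<in> lens r0 k j' \<Longrightarrow> j = j'"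
proof (rule ccontr)
  have gen: "x \<notin> lens r0 k j'" if "j < j'" "j' \<le> k - 1" "x \<in> lens r0 k j" for j j'
  proof
    assume x': "x \<in> lens r0 k j'"
    have "real (k - j') \<le> real k - real j - 1" using that k3 by (simp add: of_nat_diff)
    then have "real (k - j') * r0 \<le> (real k - real j - 1) * r0" using r0_pos by (simp add: mult_right_mono)
    moreover have "1 - real (k - j') * r0 < x" "x < real j * r0" using x' that(3) by (auto simp: lens_def)
    ultimately have "1 < (real k - 1) * r0" by (simp add: algebra_simps)
    with k1r0' show False by simp
  qed
  assume "j \<in> {1..k-1}" "j' \<in> {1..k-1}" "x \<in> lens r0 k j" "x \<in> lens r0 k j'" "j \<noteq> j'"
  then show False using gen[of j j'] gen[of j' j] by (cases "j < j'") auto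
qed

lemma lensidx_eq: "j \<in> {1..k-1} \<Longrightarrow> x \<in> lens r0 k j \<Longrightarrow> lensidx r0 k x = j"
  unfolding lensidx_def
proof (rule the_equality)
  fix j' assume "j \<in> {1..k-1}" "x \<in> lens r0 k j" "j' \<in> {1..k - 1} \<and> x \<in> lens r0 k j'"
  then show "j' = j" using lens_disj[of j' j x] by blast
qed auto

lemma offset_eq: "j \<in> {1..k-1} \<Longrightarrow> x \<in> lens r0 k j \<Longrightarrow> offset r0 k x = x - a j"
  by (simp add: offset_def lensidx_eq a_def)

lemma offset_range: "j \<in> {1..k-1} \<Longrightarrow> x \<in> lens r0 k j \<Longrightarrow> 0 < offset r0 k x \<and> offset r0 k x < \<delta>"
  using lens_eq[of j] by (auto simp: offset_eq)

lemma part1: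
  assumes vs: "vs \<in> khop_paths r0 k \<omega>"
  shows "\<forall>j\<in>{1..k-1}. vs ! j \<in> lens r0 k j"
proof -
  from vs have v0: "vs ! 0 = 0" and vk: "vs ! k = 1"
    and ad: "\<And>i. i < k \<Longrightarrow> \<bar>vs ! i - vs ! Suc i\<bar> < r0"
    by (auto simp: khop_paths_def adj_def)
  have up: "vs ! Suc i < real (Suc i) * r0" if "Suc i \<le> k" for i
    using that
  proof (induction i)
    case 0 then show ?case using ad[of 0] v0 by simp
  next
    case (Suc i)
    then have "vs ! Suc i < real (Suc i) * r0" by simp
    moreover have "\<bar>vs ! Suc i - vs ! Suc (Suc i)\<bar> < r0" using ad Suc.prems by simp
    ultimately show ?case by (simp add: algebra_simps)
  qed
  have lo: "vs ! (k - Suc m) > 1 - real (Suc m) * r0" if "Suc m \<le> k" for m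
    using that
  proof (induction m)
    case 0 then show ?case using ad[of "k - 1"] vk by simp
  next
    case (Suc m)
    then have "vs ! (k - Suc m) > 1 - real (Suc m) * r0" by simp
    moreover have "\<bar>vs ! (k - Suc (Suc m)) - vs ! Suc (k - Suc (Suc m))\<bar> < r0" using ad Suc.prems by simp
    moreover have "Suc (k - Suc (Suc m)) = k - Suc m" using Suc.prems by simp
    ultimately show ?case by (simp add: algebra_simps)
  qed
  show ?thesis
  proof
    fix j assume j: "j \<in> {1..k-1}"
    then obtain i where i: "j = Suc i" by (cases j) auto
    have "vs ! j < real j * r0" using up[of i] i j by simp
    moreover obtain m where m: "k - j = Suc m" using j by (cases "k - j") auto
    then have "j = k - Suc m" using j by simp
    then have "vs ! j > 1 - real (k - j) * r0" using lo[of m] m j by simp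
    ultimately show "vs ! j \<in> lens r0 k j" by (simp add: lens_def)
  qed
qed

end

lemma emb0: "emb_tuples u 0 = {[]}"
  by (auto simp: emb_tuples_def)

lemma emb_finite: "finite (emb_tuples u d)"
proof -
  have "emb_tuples u d \<subseteq> {xs. set xs \<subseteq> {..<length u} \<and> length xs = d}"
    by (auto simp: emb_tuples_def in_set_conv_nth)
  then show ?thesis by (rule finite_subset) (rule finite_lists_length_eq, simp)
qed

lemma emb_le_last:
  assumes "p \<in> emb_tuples u d" "i < d"
  shows "p ! i \<le> p ! (d - 1)"
proof -
  have "sorted_wrt (<) p" "length p = d" using assms by (auto simp: emb_tuples_def)
  then show ?thesis using assms(2)
    by (metis diff_Suc_1 le_eq_less_or_eq less_Suc_eq_le not_less_eq sorted_wrt_nth_less Suc_pred' gr_implies_not_zero)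
qed

lemma emb_snoc:
  assumes d: "d \<ge> 1"
  shows "emb_tuples (u @ [x]) d = emb_tuples u d \<union> (if x = d then (\<lambda>q. q @ [length u]) ` emb_tuples u (d - 1) else {})"
proof (intro equalityI subsetI)
  fix p assume p: "p \<in> emb_tuples (u @ [x]) d"
  then have lp: "length p = d" and sp: "sorted_wrt (<) p"
    and pi: "\<And>i. i < d \<Longrightarrow> p ! i < Suc (length u) \<and> (u @ [x]) ! (p ! i) = Suc i"
    by (auto simp: emb_tuples_def)
  show "p \<in> emb_tuples u d \<union> (if x = d then (\<lambda>q. q @ [length u]) ` emb_tuples u (d - 1) else {})"
  proof (cases "p ! (d - 1) < length u")
    case True
    have "\<forall>i<d. p ! i < length u \<and> u ! (p ! i) = Suc i"
    proof (intro allI impI)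
      fix i assume "i < d"
      then have "p ! i \<le> p ! (d - 1)" using emb_le_last[OF p] by simp
      then have "p ! i < length u" using True by simp
      then show "p ! i < length u \<and> u ! (p ! i) = Suc i" using pi[OF \<open>i < d\<close>] by (simp add: nth_append)
    qed
    then show ?thesis using lp sp by (simp add: emb_tuples_def)
  next
    case False
    then have last: "p ! (d - 1) = length u" using pi[of "d - 1"] d by simp
    then have xd: "x = d" using pi[of "d - 1"] d by simp
    define q where "q = butlast p"
    have pne: "p \<noteq> []" using lp d by auto
    have "last p = length u" using last_conv_nth[OF pne] lp last by simp
    then have pq: "p = q @ [length u]"
      using append_butlast_last_id[OF pne] unfolding q_def by simp
    have "q \<in> emb_tuples u (d - 1)"
    proof -
      have "length q = d - 1" using lp by (simp add: q_def)
      moreover have "sorted_wrt (<) q" using sp pq by (simp add: sorted_wrt_append)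
      moreover have "\<forall>i<d - 1. q ! i < length u \<and> u ! (q ! i) = Suc i"
      proof (intro allI impI)
        fix i assume i: "i < d - 1"
        have "q ! i < length u" using sp pq i \<open>length q = d - 1\<close> by (auto simp: sorted_wrt_append)
        moreover have "p ! i = q ! i" using pq i \<open>length q = d - 1\<close> by (simp add: nth_append)
        ultimately show "q ! i < length u \<and> u ! (q ! i) = Suc i" using pi[of i] i by (simp add: nth_append)
      qed
      ultimately show ?thesis by (simp add: emb_tuples_def)
    qed
    then show ?thesis using xd pq by auto
  qed
next
  fix p assume p: "p \<in> emb_tuples u d \<union> (if x = d then (\<lambda>q. q @ [length u]) ` emb_tuples u (d - 1) else {})"
  show "p \<in> emb_tuples (u @ [x]) d"
  proof (cases "p \<in> emb_tuples u d")
    case True then show ?thesis by (auto simp: emb_tuples_def nth_append)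
  next
    case False
    with p obtain q where xd: "x = d" and q: "q \<in> emb_tuples u (d - 1)" and pq: "p = q @ [length u]"
      by (auto split: if_splits)
    have lq: "length q = d - 1" and sq: "sorted_wrt (<) q" and qi: "\<And>i. i < d - 1 \<Longrightarrow> q ! i < length u \<and> u ! (q ! i) = Suc i"
      using q by (auto simp: emb_tuples_def)
    have "length p = d" using lq pq d by simp
    moreover have "sorted_wrt (<) p" using sq qi pq lq by (auto simp: sorted_wrt_append in_set_conv_nth)
    moreover have "\<forall>i<d. p ! i < length (u @ [x]) \<and> (u @ [x]) ! (p ! i) = Suc i"
    proof (intro allI impI)
      fix i assume i: "i < d"
      show "p ! i < length (u @ [x]) \<and> (u @ [x]) ! (p ! i) = Suc i"
      proof (cases "i < d - 1")
        case True then show ?thesis using qi[OF True] pq lq by (simp add: nth_append)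
      next
        case False then have "i = d - 1" using i by simp
        then show ?thesis using pq lq xd d by (simp add: nth_append)
      qed
    qed
    ultimately show ?thesis by (simp add: emb_tuples_def)
  qed
qed

lemma card_emb_snoc:
  assumes d: "d \<ge> 1"
  shows "card (emb_tuples (u @ [x]) d) = card (emb_tuples u d) + (if x = d then card (emb_tuples u (d - 1)) else 0)"
proof (cases "x = d")
  case False then show ?thesis using emb_snoc[OF d] by simp
next
  case True
  have disj: "emb_tuples u d \<inter> (\<lambda>q. q @ [length u]) ` emb_tuples u (d - 1) = {}"
  proof (rule ccontr)
    assume "\<not> ?thesis"
    then obtain q where q: "q @ [length u] \<in> emb_tuples u d" by blast
    then have "length (q @ [length u]) = d" by (simp add: emb_tuples_def)
    with q d have "(q @ [length u]) ! (d - 1) < length u" by (simp add: emb_tuples_def)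
    moreover have "d - 1 = length q" using \<open>length (q @ [length u]) = d\<close> by simp
    then have "(q @ [length u]) ! (d - 1) = length u" by simp
    ultimately show False by simp
  qed
  have "card (emb_tuples (u @ [x]) d) = card (emb_tuples u d) + card ((\<lambda>q. q @ [length u]) ` emb_tuples u (d - 1))"
    using emb_snoc[OF d] True disj by (simp add: card_Un_disjoint emb_finite)
  also have "card ((\<lambda>q. q @ [length u]) ` emb_tuples u (d - 1)) = card (emb_tuples u (d - 1))"
    by (rule card_image) (simp add: inj_on_def)
  finally show ?thesis using True by simp
qed

lemma card_emb_filter:
  "d' \<le> d \<Longrightarrow> card (emb_tuples (filter (\<lambda>a. a \<noteq> Suc d) u) d') = card (emb_tuples u d')"
proof (induction u arbitrary: d' rule: rev_induct)
  case Nil then show ?case by simp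
next
  case (snoc x u)
  show ?case
  proof (cases "d' = 0")
    case True then show ?thesis by (simp add: emb0)
  next
    case False
    then have d1: "d' \<ge> 1" by simp
    show ?thesis
    proof (cases "x = Suc d")
      case True
      then show ?thesis using snoc card_emb_snoc[OF d1, of u x] by simp
    next
      case False
      then have "card (emb_tuples (filter (\<lambda>a. a \<noteq> Suc d) (u @ [x])) d') =
          card (emb_tuples (filter (\<lambda>a. a \<noteq> Suc d) u) d') + (if x = d' then card (emb_tuples (filter (\<lambda>a. a \<noteq> Suc d) u) (d' - 1)) else 0)"
        using card_emb_snoc[OF d1] by simp
      also have "\<dots> = card (emb_tuples u d') + (if x = d' then card (emb_tuples u (d' - 1)) else 0)"
        using snoc by simp
      also have "\<dots> = card (emb_tuples (u @ [x]) d')" using card_emb_snoc[OF d1] by simp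
      finally show ?thesis .
    qed
  qed
qed

definition fl :: "nat list \<Rightarrow> nat \<Rightarrow> nat list" where
  "fl u a = filter (\<lambda>i. u ! i = a) [0..<length u]"

lemma occ_pos_fl: "occ_pos u a s = fl u a ! (s - 1)"
  by (simp add: occ_pos_def fl_def)

lemma fl_snoc: "fl (u @ [x]) a = fl u a @ (if x = a then [length u] else [])"
proof -
  have "filter (\<lambda>i. (u @ [x]) ! i = a) [0..<length u] = filter (\<lambda>i. u ! i = a) [0..<length u]"
    by (rule filter_cong) (auto simp: nth_append)
  then show ?thesis by (simp add: fl_def)
qed

lemma length_fl: "length (fl u a) = count_list u a"
proof (induction u rule: rev_induct)
  case Nil then show ?case by (simp add: fl_def)
next
  case (snoc x u) then show ?case by (simp add: fl_snoc)
qed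

lemma set_fl: "set (fl u a) = {i. i < length u \<and> u ! i = a}"
  by (auto simp: fl_def)

lemma sorted_fl: "sorted (fl u a)"
  by (simp add: fl_def sorted_filter[where f=id, simplified])

lemma occ_pos_snoc: "1 \<le> s \<Longrightarrow> s \<le> count_list u a \<Longrightarrow> occ_pos (u @ [x]) a s = occ_pos u a s"
proof -
  assume "1 \<le> s" "s \<le> count_list u a"
  then have "s - 1 < length (fl u a)" by (simp add: length_fl)
  then show ?thesis by (simp add: occ_pos_fl fl_snoc nth_append)
qed

lemma occ_pos_snoc_last: "occ_pos (u @ [a]) a (Suc (count_list u a)) = length u"
  by (simp add: occ_pos_fl fl_snoc nth_append length_fl)

lemma occ_pos_in: "1 \<le> s \<Longrightarrow> s \<le> count_list u a \<Longrightarrow> occ_pos u a s < length u \<and> u ! occ_pos u a s = a"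
proof -
  assume "1 \<le> s" "s \<le> count_list u a"
  then have "fl u a ! (s - 1) \<in> set (fl u a)" by (simp add: length_fl)
  then show ?thesis by (simp add: occ_pos_fl set_fl)
qed

lemma occ_pos_max:
  assumes "i < length u" "u ! i = a" "count_list u a \<ge> 1"
  shows "i \<le> occ_pos u a (count_list u a)"
proof -
  have "i \<in> set (fl u a)" using assms by (simp add: set_fl)
  then obtain j where j: "j < length (fl u a)" "fl u a ! j = i" by (auto simp: in_set_conv_nth)
  then have "fl u a ! j \<le> fl u a ! (count_list u a - 1)"
    using sorted_fl length_fl by (metis Suc_pred' assms(3) diff_less le_Suc_eq less_Suc_eq_le less_one not_le sorted_nth_mono zero_less_one)
  then show ?thesis using j by (simp add: occ_pos_fl)
qed

lemma count_take_le: "count_list (take n xs) a \<le> count_list xs a"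
proof -
  have "count_list xs a = count_list (take n xs) a + count_list (drop n xs) a"
    by (metis append_take_drop_id count_list_append)
  then show ?thesis by simp
qed

lemma count_filter_keep: "P a \<Longrightarrow> count_list (filter P xs) a = count_list xs a"
  by (induction xs) auto

lemma St_snoc:
  assumes d: "d \<ge> 1" and t: "t \<le> count_list u d"
  shows "S_t d t (u @ [x]) = S_t d t u"
proof (cases "t \<ge> 1")
  case False then show ?thesis by (simp add: S_t_def)
next
  case True
  have o: "occ_pos (u @ [x]) d t = occ_pos u d t" using occ_pos_snoc[OF True t] .
  have olt: "occ_pos u d t < length u" using occ_pos_in[OF True t] by simp
  have "{p \<in> emb_tuples (u @ [x]) d. 1 \<le> t \<and> t \<le> count_list (u @ [x]) d \<and> p ! (d - 1) \<le> occ_pos (u @ [x]) d t}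
      = {p \<in> emb_tuples u d. 1 \<le> t \<and> t \<le> count_list u d \<and> p ! (d - 1) \<le> occ_pos u d t}"
  proof (intro equalityI subsetI)
    fix p assume "p \<in> {p \<in> emb_tuples (u @ [x]) d. 1 \<le> t \<and> t \<le> count_list (u @ [x]) d \<and> p ! (d - 1) \<le> occ_pos (u @ [x]) d t}"
    then have p: "p \<in> emb_tuples (u @ [x]) d" and pl: "p ! (d - 1) \<le> occ_pos u d t" using o by auto
    have "\<forall>i<d. p ! i < length u \<and> u ! (p ! i) = Suc i"
    proof (intro allI impI)
      fix i assume i: "i < d"
      then have "p ! i < length u" using emb_le_last[OF p i] pl olt by simp
      then show "p ! i < length u \<and> u ! (p ! i) = Suc i" using p i by (auto simp: emb_tuples_def nth_append)
    qed
    then show "p \<in> {p \<in> emb_tuples u d. 1 \<le> t \<and> t \<le> count_list u d \<and> p ! (d - 1) \<le> occ_pos u d t}"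
      using p pl True t by (auto simp: emb_tuples_def)
  next
    fix p assume "p \<in> {p \<in> emb_tuples u d. 1 \<le> t \<and> t \<le> count_list u d \<and> p ! (d - 1) \<le> occ_pos u d t}"
    then show "p \<in> {p \<in> emb_tuples (u @ [x]) d. 1 \<le> t \<and> t \<le> count_list (u @ [x]) d \<and> p ! (d - 1) \<le> occ_pos (u @ [x]) d t}"
      using o by (auto simp: emb_tuples_def nth_append)
  qed
  then show ?thesis by (simp add: S_t_def)
qed

lemma St_full:
  assumes d: "d \<ge> 1"
  shows "S_t d (count_list u d) u = card (emb_tuples u d)"
proof (cases "count_list u d \<ge> 1")
  case False
  have "emb_tuples u d = {}"
  proof (rule ccontr)
    assume "emb_tuples u d \<noteq> {}"
    then obtain p where p: "p \<in> emb_tuples u d" by blast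
    then have "p ! (d - 1) < length u" "u ! (p ! (d - 1)) = d" using d by (auto simp: emb_tuples_def)
    then have "d \<in> set u" by (metis nth_mem)
    then have "count_list u d \<ge> 1" by (metis count_list_0_iff less_one not_le)
    with False show False by simp
  qed
  then show ?thesis using False by (simp add: S_t_def)
next
  case True
  have "{p \<in> emb_tuples u d. 1 \<le> count_list u d \<and> count_list u d \<le> count_list u d \<and> p ! (d - 1) \<le> occ_pos u d (count_list u d)}
     = emb_tuples u d"
    using True d by (auto simp: emb_tuples_def intro!: occ_pos_max)
  then show ?thesis by (simp add: S_t_def)
qed

lemma word_identity:
  assumes d: "d \<ge> 1"
  shows "card (emb_tuples W (Suc d)) =
    (\<Sum>s = 1..count_list W (Suc d). S_t d (pi_ij d (Suc d) W s) (filter (\<lambda>a. a \<noteq> Suc d) W))"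
proof (induction W rule: rev_induct)
  case Nil
  have "emb_tuples [] (Suc d) = {}" unfolding emb_tuples_def by (auto dest: spec[of _ 0])
  then show ?case by simp
next
  case (snoc x W)
  let ?F = "filter (\<lambda>a. a \<noteq> Suc d)"
  have pi_eq: "pi_ij d (Suc d) (W @ [x]) s = pi_ij d (Suc d) W s" if s: "1 \<le> s" "s \<le> count_list W (Suc d)" for s
    using occ_pos_snoc[OF s, of x] occ_pos_in[OF s] by (simp add: pi_ij_def)
  have pi_le: "pi_ij d (Suc d) W s \<le> count_list (?F W) d" for s
    by (simp add: pi_ij_def count_filter_keep count_take_le)
  have oldterms: "(\<Sum>s = 1..count_list W (Suc d). S_t d (pi_ij d (Suc d) (W @ [x]) s) (?F (W @ [x])))
      = (\<Sum>s = 1..count_list W (Suc d). S_t d (pi_ij d (Suc d) W s) (?F W))"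
  proof (rule sum.cong[OF refl])
    fix s assume "s \<in> {1..count_list W (Suc d)}"
    then have s: "1 \<le> s" "s \<le> count_list W (Suc d)" by auto
    show "S_t d (pi_ij d (Suc d) (W @ [x]) s) (?F (W @ [x])) = S_t d (pi_ij d (Suc d) W s) (?F W)"
    proof (cases "x = Suc d")
      case True then show ?thesis using pi_eq[OF s] by simp
    next
      case False then show ?thesis using pi_eq[OF s] St_snoc[OF d pi_le] by simp
    qed
  qed
  show ?case
  proof (cases "x = Suc d")
    case False
    then have "card (emb_tuples (W @ [x]) (Suc d)) = card (emb_tuples W (Suc d))"
      using card_emb_snoc[of "Suc d" W x] by simp
    then show ?thesis using snoc oldterms False by simp
  next
    case True
    have cnt: "count_list (W @ [x]) (Suc d) = Suc (count_list W (Suc d))" using True by simp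
    have last: "pi_ij d (Suc d) (W @ [x]) (Suc (count_list W (Suc d))) = count_list W d"
      using True occ_pos_snoc_last[of W "Suc d"] by (simp add: pi_ij_def)
    have "S_t d (count_list W d) (?F (W @ [x])) = card (emb_tuples W d)"
      using True St_full[OF d, of "?F W"] card_emb_filter[of d d W] by (simp add: count_filter_keep)
    then have "(\<Sum>s = 1..count_list (W @ [x]) (Suc d). S_t d (pi_ij d (Suc d) (W @ [x]) s) (?F (W @ [x])))
        = card (emb_tuples W (Suc d)) + card (emb_tuples W d)"
      using cnt last oldterms snoc by simp
    moreover have "card (emb_tuples (W @ [x]) (Suc d)) = card (emb_tuples W (Suc d)) + card (emb_tuples W d)"
      using card_emb_snoc[of "Suc d" W x] True by simp
    ultimately show ?thesis by simp
  qed
qed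

lemma chain_less:
  assumes "\<And>i. Suc i < m \<Longrightarrow> (g::nat \<Rightarrow> 'a::order) i < g (Suc i)" "i < j" "j < m"
  shows "g i < g j"
  using assms(2,3)
proof (induction j)
  case 0 then show ?case by simp
next
  case (Suc j)
  show ?case
  proof (cases "i = j")
    case True then show ?thesis using assms(1) Suc by simp
  next
    case False
    then have "g i < g j" using Suc by simp
    also have "g j < g (Suc j)" using assms(1) Suc by simp
    finally show ?thesis .
  qed
qed

context hop begin

definition xsl :: "nat \<times> (nat \<Rightarrow> real) \<Rightarrow> real list" where
  "xsl \<omega> = sort_key (\<lambda>x. - offset r0 k x) (sorted_list_of_set (lens_pts r0 k \<omega>))"

lemma Wword_xsl: "Wword r0 k \<omega> = map (lensidx r0 k) (xsl \<omega>)"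
  by (simp add: Wword_def xsl_def)

lemma finite_pts: "finite (pts \<omega>)" by (simp add: pts_def)
lemma finite_lens_pts: "finite (lens_pts r0 k \<omega>)" by (simp add: lens_pts_def finite_pts)

lemma xsl_set: "set (xsl \<omega>) = lens_pts r0 k \<omega>" and xsl_distinct: "distinct (xsl \<omega>)"
  by (simp_all add: xsl_def finite_lens_pts)

lemma xsl_sorted: "sorted (map (\<lambda>x. - offset r0 k x) (xsl \<omega>))"
  by (simp add: xsl_def)

lemma xsl_strict:
  assumes wd: "W_welldef r0 k \<omega>" and ij: "i < j" "j < length (xsl \<omega>)"
  shows "offset r0 k (xsl \<omega> ! j) < offset r0 k (xsl \<omega> ! i)"
proof -
  have "- offset r0 k (xsl \<omega> ! i) \<le> - offset r0 k (xsl \<omega> ! j)"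
    using sorted_nth_mono[OF xsl_sorted, of i j] ij by simp
  moreover have "xsl \<omega> ! i \<noteq> xsl \<omega> ! j" using xsl_distinct ij by (simp add: nth_eq_iff_index_eq)
  moreover have "xsl \<omega> ! i \<in> lens_pts r0 k \<omega>" "xsl \<omega> ! j \<in> lens_pts r0 k \<omega>"
    using ij xsl_set by (metis less_trans nth_mem)+
  ultimately show ?thesis using wd unfolding W_welldef_def inj_on_def by force
qed

lemma lens_pts_lens: "x \<in> lens_pts r0 k \<omega> \<Longrightarrow> x \<in> lens r0 k (lensidx r0 k x) \<and> lensidx r0 k x \<in> {1..k-1}"
  by (auto simp: lens_pts_def lensidx_eq)

lemma adj_iff:
  assumes j: "j \<in> {1..k-1}" "Suc j \<in> {1..k-1}" and x: "x \<in> lens r0 k j" and y: "y \<in> lens r0 k (Suc j)"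
  shows "adj r0 x y \<longleftrightarrow> offset r0 k y < offset r0 k x"
proof -
  have "a (Suc j) = a j + r0" using j by (simp add: a_def of_nat_diff algebra_simps)
  moreover have "x = a j + offset r0 k x" "y = a (Suc j) + offset r0 k y"
    using offset_eq[OF j(1) x] offset_eq[OF j(2) y] by simp_all
  moreover have "0 < offset r0 k x" "offset r0 k x < \<delta>" "0 < offset r0 k y" "offset r0 k y < \<delta>"
    using offset_range[OF j(1) x] offset_range[OF j(2) y] by auto
  ultimately show ?thesis using delta_lt unfolding adj_def by auto
qed

lemma lens1: "x \<in> lens r0 k 1 \<Longrightarrow> adj r0 0 x"
proof -
  assume x: "x \<in> lens r0 k 1"
  have "(1::nat) \<in> {1..k-1}" using k3 by simp
  then have "0 < x" using lens_sub01 x by blast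
  moreover have "x < r0" using x by (simp add: lens_def)
  ultimately show ?thesis by (simp add: adj_def)
qed

lemma lensk: "x \<in> lens r0 k (k - 1) \<Longrightarrow> adj r0 x 1"
proof -
  assume x: "x \<in> lens r0 k (k - 1)"
  then have "x < 1" "1 - r0 < x" using lens_sub01[of "k-1" x] k3 by (auto simp: lens_def)
  then show ?thesis by (auto simp: adj_def)
qed

definition pth :: "real list \<Rightarrow> nat list \<Rightarrow> real list" where
  "pth xs p = 0 # map (\<lambda>i. xs ! (p ! i)) [0..<k-1] @ [1]"

lemma pth_length: "length (pth xs p) = Suc k" using k3 by (simp add: pth_def)
lemma pth_0: "pth xs p ! 0 = 0" by (simp add: pth_def)
lemma pth_mid: "j \<in> {1..k-1} \<Longrightarrow> pth xs p ! j = xs ! (p ! (j - 1))"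
  by (cases j) (auto simp: pth_def nth_append)
lemma pth_k: "pth xs p ! k = 1" using k3 by (simp add: pth_def nth_append)

lemma sigma_emb:
  assumes wd: "W_welldef r0 k \<omega>"
  shows "sigma r0 k \<omega> = card (emb_tuples (Wword r0 k \<omega>) (k - 1))"
proof -
  let ?xs = "xsl \<omega>"
  let ?W = "Wword r0 k \<omega>"
  have lenW: "length ?W = length ?xs" by (simp add: Wword_xsl)
  have inlp: "?xs ! i \<in> lens_pts r0 k \<omega>" if "i < length ?xs" for i
    using that xsl_set nth_mem by metis
  have inlens: "?xs ! i \<in> lens r0 k j" if "i < length ?xs" "?W ! i = j" for i j
    using lens_pts_lens[OF inlp[OF that(1)]] that by (auto simp: Wword_xsl)
  have idx_in: "lensidx r0 k (?xs ! i) \<in> {1..k-1}" if "i < length ?xs" for i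
    using lens_pts_lens[OF inlp[OF that]] by auto
  have xs_pts: "?xs ! i \<in> pts \<omega>" if "i < length ?xs" for i
    using that xsl_set by (metis IntD1 lens_pts_def nth_mem)
  have "bij_betw (pth ?xs) (emb_tuples ?W (k - 1)) (khop_paths r0 k \<omega>)"
  proof (rule bij_betw_imageI)
    show "inj_on (pth ?xs) (emb_tuples ?W (k - 1))"
    proof (rule inj_onI)
      fix p p' assume p: "p \<in> emb_tuples ?W (k - 1)" and p': "p' \<in> emb_tuples ?W (k - 1)"
        and eq: "pth ?xs p = pth ?xs p'"
      show "p = p'"
      proof (rule nth_equalityI)
        show "length p = length p'" using p p' by (simp add: emb_tuples_def)
        fix i assume i: "i < length p"
        then have i': "i < k - 1" using p by (simp add: emb_tuples_def)
        have "pth ?xs p ! Suc i = pth ?xs p' ! Suc i" using eq by simp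
        then have "?xs ! (p ! i) = ?xs ! (p' ! i)" using i' pth_mid[of "Suc i"] by simp
        moreover have "p ! i < length ?xs" "p' ! i < length ?xs" using p p' i' lenW by (auto simp: emb_tuples_def)
        ultimately show "p ! i = p' ! i" using xsl_distinct by (simp add: nth_eq_iff_index_eq)
      qed
    qed
  next
    show "pth ?xs ` emb_tuples ?W (k - 1) = khop_paths r0 k \<omega>"
    proof (intro equalityI subsetI)
      fix vs assume "vs \<in> pth ?xs ` emb_tuples ?W (k - 1)"
      then obtain p where p: "p \<in> emb_tuples ?W (k - 1)" and vs: "vs = pth ?xs p" by blast
      have pl: "length p = k - 1" and ps: "sorted_wrt (<) p"
        and pi: "\<And>i. i < k - 1 \<Longrightarrow> p ! i < length ?xs \<and> ?W ! (p ! i) = Suc i"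
        using p lenW by (auto simp: emb_tuples_def)
      have mid: "vs ! j \<in> lens r0 k j" if "j \<in> {1..k-1}" for j
      proof -
        have "j - 1 < k - 1" using that by auto
        then show ?thesis using inlens[of "p ! (j-1)" j] pi[of "j - 1"] that vs pth_mid by auto
      qed
      have midpts: "vs ! j \<in> pts \<omega>" if "j \<in> {1..k-1}" for j
      proof -
        have "j - 1 < k - 1" using that by auto
        then show ?thesis using xs_pts pi[of "j - 1"] that vs pth_mid by auto
      qed
      have "set vs \<subseteq> verts \<omega>"
      proof
        fix v assume "v \<in> set vs"
        then obtain j where j: "j < Suc k" "vs ! j = v" using vs pth_length by (metis in_set_conv_nth)
        show "v \<in> verts \<omega>"
        proof (cases "j = 0 \<or> j = k")
          case True then show ?thesis using j vs pth_0 pth_k by (auto simp: verts_def)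
        next
          case False
          then have "j \<in> {1..k-1}" using j by auto
          then show ?thesis using midpts[of j] j by (auto simp: verts_def)
        qed
      qed
      moreover have "\<forall>i<k. adj r0 (vs ! i) (vs ! Suc i)"
      proof (intro allI impI)
        fix i assume i: "i < k"
        show "adj r0 (vs ! i) (vs ! Suc i)"
        proof (cases "i = 0")
          case True then show ?thesis using lens1 mid[of 1] vs pth_0 k3 by auto
        next
          case False
          show ?thesis
          proof (cases "Suc i = k")
            case True
            then have "i = k - 1" by simp
            then show ?thesis using lensk mid[of "k-1"] vs pth_k k3 by auto
          next
            case False
            have ii: "i \<in> {1..k-1}" "Suc i \<in> {1..k-1}" using \<open>i \<noteq> 0\<close> False i by auto
            have "p ! (i - 1) < p ! i" using ps pl ii
              by (metis Suc_le_eq atLeastAtMost_iff diff_less less_one not_le sorted_wrt_nth_less le_less_trans diff_Suc_1 less_Suc_eq_le)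
            then have "offset r0 k (?xs ! (p ! i)) < offset r0 k (?xs ! (p ! (i - 1)))"
              using xsl_strict[OF wd] pi[of i] ii by auto
            moreover have "vs ! i = ?xs ! (p ! (i - 1))" "vs ! Suc i = ?xs ! (p ! i)"
              using vs pth_mid ii by auto
            ultimately show ?thesis using adj_iff[OF ii mid[OF ii(1)] mid[OF ii(2)]] by simp
          qed
        qed
      qed
      ultimately show "vs \<in> khop_paths r0 k \<omega>"
        using vs pth_length pth_0 pth_k by (simp add: khop_paths_def)
    next
      fix vs assume vs: "vs \<in> khop_paths r0 k \<omega>"
      have inl: "\<forall>j\<in>{1..k-1}. vs ! j \<in> lens r0 k j" using part1[OF vs] .
      have lv: "length vs = Suc k" and v0: "vs ! 0 = 0" and vk: "vs ! k = 1" and sv: "set vs \<subseteq> verts \<omega>"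
        and ad: "\<And>i. i < k \<Longrightarrow> adj r0 (vs ! i) (vs ! Suc i)"
        using vs by (auto simp: khop_paths_def)
      have "\<forall>j\<in>{1..k-1}. \<exists>q. q < length ?xs \<and> ?xs ! q = vs ! j"
      proof
        fix j assume j: "j \<in> {1..k-1}"
        have "vs ! j \<in> verts \<omega>" using sv lv j by (auto intro: nth_mem)
        moreover have "vs ! j \<noteq> 0" "vs ! j \<noteq> 1" using lens_sub01[OF j] inl j by force+
        ultimately have "vs ! j \<in> pts \<omega>" by (auto simp: verts_def)
        then have "vs ! j \<in> lens_pts r0 k \<omega>" using inl j unfolding lens_pts_def by blast
        then show "\<exists>q. q < length ?xs \<and> ?xs ! q = vs ! j" using xsl_set by (metis in_set_conv_nth)
      qed
      then obtain q where q: "\<And>j. j \<in> {1..k-1} \<Longrightarrow> q j < length ?xs \<and> ?xs ! q j = vs ! j"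
        by metis
      have qidx: "?W ! q j = j" if "j \<in> {1..k-1}" for j
        using q[OF that] lensidx_eq[OF that] inl that by (simp add: Wword_xsl)
      have qmono: "q (Suc i) < q (Suc (Suc i))" if "Suc (Suc i) < Suc (k - 1)" for i
      proof -
        have ii: "Suc i \<in> {1..k-1}" "Suc (Suc i) \<in> {1..k-1}" using that by auto
        have "adj r0 (vs ! Suc i) (vs ! Suc (Suc i))" using ad that by simp
        then have lt: "offset r0 k (vs ! Suc (Suc i)) < offset r0 k (vs ! Suc i)"
          using adj_iff[OF ii] inl ii by auto
        show ?thesis
        proof (rule ccontr)
          assume "\<not> ?thesis"
          then have "q (Suc (Suc i)) = q (Suc i) \<or> q (Suc (Suc i)) < q (Suc i)" by auto
          then show False
          proof
            assume "q (Suc (Suc i)) = q (Suc i)"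
            then show False using q[OF ii(1)] q[OF ii(2)] lt by simp
          next
            assume lt2: "q (Suc (Suc i)) < q (Suc i)"
            show False using xsl_strict[OF wd lt2] q[OF ii(1)] q[OF ii(2)] lt by simp
          qed
        qed
      qed
      define p where "p = map (\<lambda>i. q (Suc i)) [0..<k-1]"
      have "p \<in> emb_tuples ?W (k - 1)"
      proof -
        have "sorted_wrt (<) p"
          unfolding p_def sorted_wrt_iff_nth_less
        proof (intro allI impI)
          fix i j assume "i < j" "j < length (map (\<lambda>i. q (Suc i)) [0..<k - 1])"
          then show "map (\<lambda>i. q (Suc i)) [0..<k - 1] ! i < map (\<lambda>i. q (Suc i)) [0..<k - 1] ! j"
            using chain_less[of "k - 1" "\<lambda>i. q (Suc i)" i j] qmono by simp
        qed
        moreover have "\<forall>i<k-1. p ! i < length ?W \<and> ?W ! (p ! i) = Suc i"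
        proof (intro allI impI)
          fix i assume "i < k - 1"
          then have "Suc i \<in> {1..k-1}" by auto
          then show "p ! i < length ?W \<and> ?W ! (p ! i) = Suc i"
            using q qidx lenW \<open>i < k - 1\<close> by (simp add: p_def)
        qed
        ultimately show ?thesis by (simp add: emb_tuples_def p_def)
      qed
      moreover have "pth ?xs p = vs"
      proof (rule nth_equalityI)
        show "length (pth ?xs p) = length vs" using lv pth_length by simp
        fix j assume "j < length (pth ?xs p)"
        then have j: "j < Suc k" using pth_length by simp
        show "pth ?xs p ! j = vs ! j"
        proof (cases "j = 0")
          case True then show ?thesis using pth_0 v0 by simp
        next
          case False
          show ?thesis
          proof (cases "j = k")
            case True then show ?thesis using pth_k vk by simp
          next
            case False
            then have jj: "j \<in> {1..k-1}" using \<open>j \<noteq> 0\<close> j by auto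
            then have "pth ?xs p ! j = ?xs ! (p ! (j - 1))" using pth_mid by simp
            also have "p ! (j - 1) = q j"
            proof -
              have "j - 1 < k - 1" "Suc (j - 1) = j" using jj by auto
              then show ?thesis by (simp add: p_def)
            qed
            finally show ?thesis using q[OF jj] by simp
          qed
        qed
      qed
      ultimately show "vs \<in> pth ?xs ` emb_tuples ?W (k - 1)" by blast
    qed
  qed
  then show ?thesis unfolding sigma_def by (simp add: bij_betw_same_card)
qed

lemma count_map_distinct: "distinct xs \<Longrightarrow> count_list (map g xs) j = card {x \<in> set xs. g x = j}"
proof (induction xs)
  case Nil then show ?case by simp
next
  case (Cons x xs)
  have "{y \<in> set (x # xs). g y = j} = (if g x = j then insert x {y \<in> set xs. g y = j} else {y \<in> set xs. g y = j})"
    by auto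
  then show ?case using Cons by auto
qed

lemma count_W: "j \<in> {1..k-1} \<Longrightarrow> count_list (Wword r0 k \<omega>) j = mcount r0 k j \<omega>"
proof -
  assume j: "j \<in> {1..k-1}"
  have "count_list (Wword r0 k \<omega>) j = card {x \<in> lens_pts r0 k \<omega>. lensidx r0 k x = j}"
    by (simp add: Wword_xsl count_map_distinct xsl_distinct xsl_set)
  also have "{x \<in> lens_pts r0 k \<omega>. lensidx r0 k x = j} = pts \<omega> \<inter> lens r0 k j"
    using j lens_pts_lens by (auto simp: lens_pts_def lensidx_eq)
  finally show ?thesis by (simp add: mcount_def)
qed

lemma part3_det:
  assumes wd: "W_welldef r0 k \<omega>"
  shows "sigma r0 k \<omega> = card (emb_tuples (Wword r0 k \<omega>) (k - 1))
       \<and> sigma r0 k \<omega> =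
           (\<Sum>s = 1..mcount r0 k (k - 1) \<omega>.
              S_t (k - 2) (pi_ij (k - 2) (k - 1) (Wword r0 k \<omega>) s)
                  (filter (\<lambda>a. a \<noteq> k - 1) (Wword r0 k \<omega>)))"
proof -
  have e: "k - 1 = Suc (k - 2)" using k3 by simp
  have "k - 1 \<in> {1..k-1}" using k3 by simp
  then have "mcount r0 k (k - 1) \<omega> = count_list (Wword r0 k \<omega>) (Suc (k - 2))"
    using count_W e by simp
  moreover have "k - 2 \<ge> 1" using k3 by simp
  ultimately show ?thesis using sigma_emb[OF wd] word_identity[of "k - 2" "Wword r0 k \<omega>"] e by simp
qed

end

definition U :: "real measure" where "U = uniform_measure lborel {0..1}"
abbreviation PI :: "(nat \<Rightarrow> real) measure" where "PI \<equiv> PiM (UNIV::nat set) (\<lambda>_. U)"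

lemma sets_U[measurable_cong, simp]: "sets U = sets borel" by (simp add: U_def)
lemma space_U[simp]: "space U = UNIV" by (simp add: U_def)
lemma U_prob: "prob_space U"
  unfolding U_def by (rule prob_space_uniform_measure) auto

lemma emeasure_U: "B \<in> sets borel \<Longrightarrow> emeasure U B = emeasure lborel ({0..1} \<inter> B)"
  by (simp add: U_def divide_ennreal_def)

lemma U_single: "emeasure U {a} = 0"
proof -
  have "emeasure U {a} = emeasure lborel ({0..1} \<inter> {a})" by (simp add: emeasure_U)
  also have "\<dots> \<le> emeasure lborel {a}" by (rule emeasure_mono) auto
  finally show ?thesis by simp
qed

interpretation PIp: product_prob_space "\<lambda>_::nat. U" UNIV
  by (simp add: product_prob_space_def product_sigma_finite_def U_prob prob_space_imp_sigma_finite product_prob_space_axioms_def)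

lemma space_PI[simp]: "space PI = UNIV" by (simp add: space_PiM)

lemma null_diff:
  assumes ii: "i \<noteq> i'"
  shows "{f. f i - f i' = c} \<in> null_sets PI"
proof -
  let ?P' = "PiM (UNIV - {i}) (\<lambda>_::nat. U)"
  let ?T = "\<lambda>p. (snd p)(i := fst p)"
  interpret P': prob_space ?P' by (rule prob_space_PiM) (simp add: U_prob)
  interpret U: prob_space U by (rule U_prob)
  interpret pair_sigma_finite U ?P' by unfold_locales
  have ins: "insert i (UNIV - {i}) = UNIV" by auto
  have D: "distr (U \<Otimes>\<^sub>M ?P') PI ?T = PI"
  proof -
    have e: "(\<lambda>(x, X). X(i := x)) = ?T" by (auto simp: fun_eq_iff)
    have "distr (U \<Otimes>\<^sub>M ?P') (PiM (insert i (UNIV - {i})) (\<lambda>_. U)) (\<lambda>(x, X). X(i := x)) = PiM (insert i (UNIV - {i})) (\<lambda>_. U)"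
      by (rule distr_pair_PiM_eq_PiM) (auto simp: U_prob)
    then show ?thesis unfolding e ins .
  qed
  have Tm: "?T \<in> measurable (U \<Otimes>\<^sub>M ?P') PI"
    by (rule measurable_fun_upd[where J="UNIV - {i}"]) auto
  have A: "{f. f i - f i' = c} \<in> sets PI"
  proof -
    have "{f \<in> space PI. f i - f i' = c} \<in> sets PI" by measurable
    then show ?thesis by simp
  qed
  have "emeasure PI {f. f i - f i' = c} = emeasure (U \<Otimes>\<^sub>M ?P') (?T -` {f. f i - f i' = c} \<inter> space (U \<Otimes>\<^sub>M ?P'))"
    by (subst D[symmetric]) (rule emeasure_distr[OF Tm A])
  also have "?T -` {f. f i - f i' = c} \<inter> space (U \<Otimes>\<^sub>M ?P') = {p \<in> space (U \<Otimes>\<^sub>M ?P'). fst p - snd p i' = c}"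
    using ii by (auto simp: space_pair_measure)
  also have "emeasure (U \<Otimes>\<^sub>M ?P') \<dots> = (\<integral>\<^sup>+y. emeasure U ((\<lambda>x. (x, y)) -` {p \<in> space (U \<Otimes>\<^sub>M ?P'). fst p - snd p i' = c}) \<partial>?P')"
  proof (rule emeasure_pair_measure_alt2)
    have "i' \<in> UNIV - {i}" using ii by simp
    then show "{p \<in> space (U \<Otimes>\<^sub>M ?P'). fst p - snd p i' = c} \<in> sets (U \<Otimes>\<^sub>M ?P')" by measurable
  qed
  also have "\<dots> = (\<integral>\<^sup>+y. 0 \<partial>?P')"
  proof (rule nn_integral_cong)
    fix y assume y: "y \<in> space ?P'"
    have "(\<lambda>x. (x, y)) -` {p \<in> space (U \<Otimes>\<^sub>M ?P'). fst p - snd p i' = c} \<subseteq> {y i' + c}"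
      by auto
    then have "emeasure U ((\<lambda>x. (x, y)) -` {p \<in> space (U \<Otimes>\<^sub>M ?P'). fst p - snd p i' = c}) \<le> emeasure U {y i' + c}"
      by (intro emeasure_mono) auto
    then show "emeasure U ((\<lambda>x. (x, y)) -` {p \<in> space (U \<Otimes>\<^sub>M ?P'). fst p - snd p i' = c}) = 0"
      using U_single by simp
  qed
  finally show ?thesis using A by (simp add: null_sets_def)
qed

lemma coord_map_meas:
  assumes hm: "\<And>i. h i \<in> borel_measurable borel"
  shows "(\<lambda>f i. h i (f i)) \<in> measurable PI PI"
proof (rule measurable_PiM_single')
  fix i :: nat
  show "(\<lambda>f. h i (f i)) \<in> measurable PI U"
    using hm[of i] by (simp add: measurable_cong_sets[OF refl sets_U]) measurable
qed (simp add: space_PiM)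

lemma PI_coord_map:
  assumes hm: "\<And>i. h i \<in> borel_measurable borel" and hd: "\<And>i. distr U U (h i) = U"
  shows "distr PI PI (\<lambda>f i. h i (f i)) = PI"
proof (rule measure_eqI_PiM_infinite)
  have Tm: "(\<lambda>f i. h i (f i)) \<in> measurable PI PI" by (rule coord_map_meas[OF hm])
  fix A J assume J: "finite J" "J \<subseteq> (UNIV::nat set)" and A: "\<And>i. i \<in> J \<Longrightarrow> A i \<in> sets U"
  have hA: "h j -` A j \<in> sets U" if "j \<in> J" for j
    using measurable_sets[OF hm[of j], of "A j"] A[OF that] by simp
  have "(\<lambda>f i. h i (f i)) -` prod_emb UNIV (\<lambda>_. U) J (Pi\<^sub>E J A) \<inter> space PI
      = prod_emb UNIV (\<lambda>_. U) J (Pi\<^sub>E J (\<lambda>j. h j -` A j))"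
    by (auto simp: prod_emb_def space_PiM PiE_iff)
  then have "emeasure (distr PI PI (\<lambda>f i. h i (f i))) (prod_emb UNIV (\<lambda>_. U) J (Pi\<^sub>E J A))
      = emeasure PI (prod_emb UNIV (\<lambda>_. U) J (Pi\<^sub>E J (\<lambda>j. h j -` A j)))"
    using J A by (subst emeasure_distr[OF Tm]) (auto intro!: sets_PiM_I)
  also have "\<dots> = (\<Prod>j\<in>J. emeasure U (h j -` A j))"
    using J hA by (subst PIp.emeasure_PiM_emb) auto
  also have "\<dots> = (\<Prod>j\<in>J. emeasure U (A j))"
  proof (rule prod.cong[OF refl])
    fix j assume j: "j \<in> J"
    have "emeasure (distr U U (h j)) (A j) = emeasure U (h j -` A j \<inter> space U)"
      using A[OF j] hm[of j] by (intro emeasure_distr) (auto simp: measurable_cong_sets[OF sets_U sets_U])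
    then show "emeasure U (h j -` A j) = emeasure U (A j)" using hd[of j] by simp
  qed
  also have "\<dots> = emeasure PI (prod_emb UNIV (\<lambda>_. U) J (Pi\<^sub>E J A))"
    using J A by (subst PIp.emeasure_PiM_emb) auto
  finally show "emeasure (distr PI PI (\<lambda>f i. h i (f i))) (prod_emb UNIV (\<lambda>_. U) J (Pi\<^sub>E J A)) = emeasure PI (prod_emb UNIV (\<lambda>_. U) J (Pi\<^sub>E J A))" .
next
  show "finite_measure (distr PI PI (\<lambda>f i. h i (f i)))"
    by (rule prob_space.finite_measure, rule prob_space.prob_space_distr) (auto simp: PIp.P.prob_space_axioms intro: coord_map_meas[OF hm])
qed auto

lemma lborel_shift: "S \<in> sets borel \<Longrightarrow> emeasure lborel ((+) t -` S) = emeasure lborel (S::real set)"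
proof -
  assume S: "S \<in> sets borel"
  have "emeasure (distr lborel borel ((+) t)) S = emeasure lborel ((+) t -` S \<inter> space lborel)"
    using S by (intro emeasure_distr) auto
  then show ?thesis using lborel_distr_plus[of t] by simp
qed

lemma emeasure_Un3:
  assumes "A \<in> sets M" "B \<in> sets M" "C \<in> sets M" "A \<inter> B = {}" "A \<inter> C = {}" "B \<inter> C = {}"
  shows "emeasure M (A \<union> B \<union> C) = emeasure M A + emeasure M B + emeasure M C"
proof -
  have "emeasure M (A \<union> B \<union> C) = emeasure M (A \<union> B) + emeasure M C"
    using assms by (intro plus_emeasure[symmetric]) auto
  also have "emeasure M (A \<union> B) = emeasure M A + emeasure M B"
    using assms by (intro plus_emeasure[symmetric]) auto
  finally show ?thesis .
qed

definition sw :: "real \<Rightarrow> real \<Rightarrow> real \<Rightarrow> real \<Rightarrow> real" where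
  "sw w c1 c2 x = (if x \<in> {c1<..<c1+w} then x - c1 + c2 else if x \<in> {c2<..<c2+w} then x - c2 + c1 else x)"

lemma sw_meas: "sw w c1 c2 \<in> borel_measurable borel"
  unfolding sw_def by measurable

lemma sw_preserve:
  fixes c1 c2 w :: real
  assumes b: "0 \<le> c1" "c1 + w \<le> 1" "0 \<le> c2" "c2 + w \<le> 1"
    and disj: "c1 \<noteq> c2 \<Longrightarrow> {c1<..<c1+w} \<inter> {c2<..<c2+w} = {}"
  shows "distr U U (sw w c1 c2) = U"
proof (rule measure_eqI)
  fix B assume "B \<in> sets (distr U U (sw w c1 c2))"
  then have B: "B \<in> sets borel" by simp
  have sB: "sw w c1 c2 -` B \<in> sets borel" using measurable_sets[OF sw_meas B] by simp
  have "emeasure (distr U U (sw w c1 c2)) B = emeasure U (sw w c1 c2 -` B \<inter> space U)"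
    using B by (intro emeasure_distr) (auto simp: measurable_cong_sets[OF sets_U sets_U] sw_meas)
  also have "\<dots> = emeasure lborel ({0..1} \<inter> sw w c1 c2 -` B)"
    using sB by (simp add: emeasure_U)
  also have "\<dots> = emeasure lborel ({0..1} \<inter> B)"
  proof (cases "c1 = c2")
    case True
    then have "\<And>x. sw w c1 c2 x = x" by (simp add: sw_def)
    then have "sw w c1 c2 -` B = B" by auto
    then show ?thesis by simp
  next
    case False
    let ?I1 = "{c1<..<c1+w}" and ?I2 = "{c2<..<c2+w}"
    let ?R = "{0..1} - ?I1 - ?I2"
    have d12: "?I1 \<inter> ?I2 = {}" using disj False by simp
    have sep: "w \<le> \<bar>c1 - c2\<bar>"
    proof (rule ccontr)
      assume "\<not> ?thesis"
      then have "(c1 + c2 + w) / 2 \<in> ?I1 \<inter> ?I2" by (auto simp: abs_if field_simps split: if_splits)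
      with d12 show False by simp
    qed
    have e1: "{0..1} \<inter> sw w c1 c2 -` B = (?R \<inter> B) \<union> ((+) (c2 - c1) -` (?I2 \<inter> B)) \<union> ((+) (c1 - c2) -` (?I1 \<inter> B))"
    proof (rule set_eqI)
      fix x
      consider "x \<in> ?I1" | "x \<notin> ?I1" "x \<in> ?I2" | "x \<notin> ?I1" "x \<notin> ?I2" by blast
      then show "x \<in> {0..1} \<inter> sw w c1 c2 -` B \<longleftrightarrow> x \<in> (?R \<inter> B) \<union> ((+) (c2 - c1) -` (?I2 \<inter> B)) \<union> ((+) (c1 - c2) -` (?I1 \<inter> B))"
      proof cases
        case 1
        then have "x \<notin> ?I2" using d12 by blast
        moreover have "c1 - c2 + x \<notin> ?I1" using 1 sep by (auto simp: abs_if split: if_splits)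
        ultimately show ?thesis using 1 b by (auto simp: sw_def algebra_simps)
      next
        case 2
        moreover have "c2 - c1 + x \<notin> ?I2" using 2 sep by (auto simp: abs_if split: if_splits)
        ultimately show ?thesis using b by (auto simp: sw_def algebra_simps)
      next
        case 3
        then show ?thesis by (auto simp: sw_def algebra_simps)
      qed
    qed
    have e2: "{0..1} \<inter> B = (?R \<inter> B) \<union> (?I2 \<inter> B) \<union> (?I1 \<inter> B)"
      using b by auto
    have m1: "(+) (c2 - c1) -` (?I2 \<inter> B) \<in> sets borel" "(+) (c1 - c2) -` (?I1 \<inter> B) \<in> sets borel"
    proof -
      have pm: "\<And>c. ((+) c :: real \<Rightarrow> real) \<in> borel_measurable borel" by measurable
      have "?I2 \<inter> B \<in> sets borel" "?I1 \<inter> B \<in> sets borel" using B by auto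
      then show "(+) (c2 - c1) -` (?I2 \<inter> B) \<in> sets borel" "(+) (c1 - c2) -` (?I1 \<inter> B) \<in> sets borel"
        using measurable_sets[OF pm] by (metis Int_UNIV_right space_borel)+
    qed
    have "emeasure lborel ({0..1} \<inter> sw w c1 c2 -` B) =
        emeasure lborel (?R \<inter> B) + emeasure lborel ((+) (c2 - c1) -` (?I2 \<inter> B)) + emeasure lborel ((+) (c1 - c2) -` (?I1 \<inter> B))"
      unfolding e1 using B m1 d12 by (intro emeasure_Un3) (auto simp: algebra_simps)
    also have "\<dots> = emeasure lborel (?R \<inter> B) + emeasure lborel (?I2 \<inter> B) + emeasure lborel (?I1 \<inter> B)"
    proof -
      have "?I2 \<inter> B \<in> sets borel" "?I1 \<inter> B \<in> sets borel" using B by auto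
      then show ?thesis using lborel_shift[of "?I2 \<inter> B" "c2 - c1"] lborel_shift[of "?I1 \<inter> B" "c1 - c2"] by simp
    qed
    also have "\<dots> = emeasure lborel ({0..1} \<inter> B)"
      unfolding e2 using B d12 by (intro emeasure_Un3[symmetric]) auto
    finally show ?thesis .
  qed
  also have "\<dots> = emeasure U B" using B by (simp add: emeasure_U)
  finally show "emeasure (distr U U (sw w c1 c2)) B = emeasure U B" .
qed simp

lemma insort_key_map:
  assumes "\<forall>y\<in>set ys. (k2 (\<phi> x) \<le> k2 (\<phi> y) \<longleftrightarrow> k1 x \<le> k1 y)"
  shows "insort_key k2 (\<phi> x) (map \<phi> ys) = map \<phi> (insort_key k1 x ys)"
  using assms by (induction ys) auto

lemma sort_key_map:
  assumes "\<forall>x\<in>set xs. \<forall>y\<in>set xs. (k2 (\<phi> x) \<le> k2 (\<phi> y) \<longleftrightarrow> k1 x \<le> k1 y)"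
  shows "sort_key k2 (map \<phi> xs) = map \<phi> (sort_key k1 xs)"
  using assms
proof (induction xs)
  case Nil then show ?case by simp
next
  case (Cons x xs)
  then have "sort_key k2 (map \<phi> xs) = map \<phi> (sort_key k1 xs)" by simp
  moreover have "\<forall>y\<in>set (sort_key k1 xs). (k2 (\<phi> x) \<le> k2 (\<phi> y) \<longleftrightarrow> k1 x \<le> k1 y)"
    using Cons.prems by simp
  ultimately show ?case by (simp add: insort_key_map)
qed

lemma sorted_list_of_set_image:
  assumes A: "finite A" and mono: "\<And>x y. x \<in> A \<Longrightarrow> y \<in> A \<Longrightarrow> x < y \<Longrightarrow> \<phi> x < (\<phi> y::'b::linorder)"
  shows "sorted_list_of_set (\<phi> ` A) = map \<phi> (sorted_list_of_set (A::'a::linorder set))"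
proof -
  have inj: "inj_on \<phi> A"
    by (rule inj_onI) (metis mono linorder_neq_iff order_less_irrefl)
  have "sorted_wrt (<) (sorted_list_of_set A)" using A by simp
  then have "sorted_wrt (\<lambda>x y. \<phi> x < \<phi> y) (sorted_list_of_set A)"
    by (rule sorted_wrt_mono_rel[rotated]) (use A mono in simp)
  then have "sorted_wrt (<) (map \<phi> (sorted_list_of_set A))"
    by (simp add: sorted_wrt_map)
  then have s1: "sorted (map \<phi> (sorted_list_of_set A))" "distinct (map \<phi> (sorted_list_of_set A))"
    by (simp_all add: strict_sorted_iff)
  have s2: "set (map \<phi> (sorted_list_of_set A)) = \<phi> ` A" using A by simp
  show ?thesis
    by (rule sorted_distinct_set_unique) (use A s1 s2 in simp_all)
qed

context hop begin

lemma transfer: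
  assumes P': "pts \<omega>' = \<phi> ` pts \<omega>"
    and mono: "\<And>x y. x \<in> pts \<omega> \<Longrightarrow> y \<in> pts \<omega> \<Longrightarrow> x < y \<Longrightarrow> \<phi> x < \<phi> y"
    and lens: "\<And>x j. x \<in> pts \<omega> \<Longrightarrow> j \<in> {1..k-1} \<Longrightarrow> \<phi> x \<in> lens r0 k j \<longleftrightarrow> x \<in> lens r0 k j"
    and off: "\<And>x y. x \<in> lens_pts r0 k \<omega> \<Longrightarrow> y \<in> lens_pts r0 k \<omega> \<Longrightarrow>
                 offset r0 k (\<phi> x) \<le> offset r0 k (\<phi> y) \<longleftrightarrow> offset r0 k x \<le> offset r0 k y"
  shows "Wword r0 k \<omega>' = Wword r0 k \<omega>"
    and "W_welldef r0 k \<omega>' = W_welldef r0 k \<omega>"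
    and "\<And>j. j \<in> {1..k-1} \<Longrightarrow> mcount r0 k j \<omega>' = mcount r0 k j \<omega>"
proof -
  have inj: "inj_on \<phi> (pts \<omega>)"
    by (rule inj_onI) (metis mono linorder_neq_iff order_less_irrefl)
  have LP: "lens_pts r0 k \<omega>' = \<phi> ` lens_pts r0 k \<omega>"
  proof
    show "lens_pts r0 k \<omega>' \<subseteq> \<phi> ` lens_pts r0 k \<omega>"
    proof
      fix y assume "y \<in> lens_pts r0 k \<omega>'"
      then obtain x j where x: "x \<in> pts \<omega>" "y = \<phi> x" "j \<in> {1..k-1}" "y \<in> lens r0 k j"
        using P' by (auto simp: lens_pts_def)
      then have "x \<in> lens_pts r0 k \<omega>" using lens unfolding lens_pts_def by blast
      then show "y \<in> \<phi> ` lens_pts r0 k \<omega>" using x by blast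
    qed
  next
    show "\<phi> ` lens_pts r0 k \<omega> \<subseteq> lens_pts r0 k \<omega>'"
    proof
      fix y assume "y \<in> \<phi> ` lens_pts r0 k \<omega>"
      then obtain x j where x: "x \<in> pts \<omega>" "y = \<phi> x" "j \<in> {1..k-1}" "x \<in> lens r0 k j"
        by (auto simp: lens_pts_def)
      then have "y \<in> lens r0 k j" using lens by blast
      then show "y \<in> lens_pts r0 k \<omega>'" using x P' unfolding lens_pts_def by blast
    qed
  qed
  have idx: "lensidx r0 k (\<phi> x) = lensidx r0 k x" if "x \<in> lens_pts r0 k \<omega>" for x
  proof -
    have "x \<in> pts \<omega>" using that by (simp add: lens_pts_def)
    with lens_pts_lens[OF that] lens show ?thesis by (metis lensidx_eq)
  qed
  have sl: "sorted_list_of_set (lens_pts r0 k \<omega>') = map \<phi> (sorted_list_of_set (lens_pts r0 k \<omega>))"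
    unfolding LP by (rule sorted_list_of_set_image[OF finite_lens_pts]) (auto simp: lens_pts_def intro: mono)
  have xs: "xsl \<omega>' = map \<phi> (xsl \<omega>)"
    unfolding xsl_def sl by (rule sort_key_map) (auto simp: finite_lens_pts off)
  show "Wword r0 k \<omega>' = Wword r0 k \<omega>"
    unfolding Wword_xsl xs using xsl_set idx by simp
  show "W_welldef r0 k \<omega>' = W_welldef r0 k \<omega>"
  proof -
    have inj': "inj_on \<phi> (lens_pts r0 k \<omega>)" using inj by (rule inj_on_subset) (auto simp: lens_pts_def)
    have "inj_on (offset r0 k) (\<phi> ` lens_pts r0 k \<omega>) \<longleftrightarrow> inj_on (offset r0 k \<circ> \<phi>) (lens_pts r0 k \<omega>)"
      using inj' by (simp add: inj_on_image_iff comp_inj_on_iff)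
    also have "\<dots> \<longleftrightarrow> inj_on (offset r0 k) (lens_pts r0 k \<omega>)"
    proof -
      have "offset r0 k (\<phi> x) = offset r0 k (\<phi> y) \<longleftrightarrow> offset r0 k x = offset r0 k y"
        if "x \<in> lens_pts r0 k \<omega>" "y \<in> lens_pts r0 k \<omega>" for x y
        using off[OF that] off[OF that(2,1)] by linarith
      then show ?thesis unfolding inj_on_def comp_def by blast
    qed
    finally show ?thesis by (simp add: W_welldef_def LP)
  qed
  fix j assume j: "j \<in> {1..k-1}"
  have "pts \<omega>' \<inter> lens r0 k j = \<phi> ` (pts \<omega> \<inter> lens r0 k j)"
    using P' lens j by auto
  then show "mcount r0 k j \<omega>' = mcount r0 k j \<omega>"
    unfolding mcount_def using inj by (simp add: card_image inj_on_Int)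
qed

end

context hop begin

definition D1 :: "real set" where
  "D1 = a ` {1..k-1} \<union> (\<lambda>j. real j * r0) ` {1..k-1}"
definition D2 :: "real set" where
  "D2 = (\<lambda>(j, j'). (real j - real j') * r0) ` ({1..k-1} \<times> {1..k-1})"

lemma finD1: "finite D1" and finD2: "finite D2" by (simp_all add: D1_def D2_def)

definition pat :: "nat \<Rightarrow> (nat \<Rightarrow> real) \<Rightarrow> (nat \<times> real \<Rightarrow> bool) \<times> (nat \<times> real \<Rightarrow> bool) \<times> (nat \<times> nat \<times> real \<Rightarrow> bool)" where
  "pat n f = ((\<lambda>(i, c). i < n \<and> c \<in> D1 \<and> f i < c), (\<lambda>(i, c). i < n \<and> c \<in> D1 \<and> c < f i),
              (\<lambda>(i, i', c). i < n \<and> i' < n \<and> c \<in> D2 \<and> f i - f i' < c))"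

lemma pat_eq_iff: "pat n f = pat n g \<longleftrightarrow>
   (\<forall>i\<in>{..<n}. \<forall>c\<in>D1. (f i < c) = (g i < c) \<and> (c < f i) = (c < g i)) \<and>
   (\<forall>i\<in>{..<n}. \<forall>i'\<in>{..<n}. \<forall>c\<in>D2. (f i - f i' < c) = (g i - g i' < c))"
proof
  assume eq: "pat n f = pat n g"
  have c1: "fst (pat n f) (i, c) = fst (pat n g) (i, c)" for i c using eq by simp
  have c2: "fst (snd (pat n f)) (i, c) = fst (snd (pat n g)) (i, c)" for i c using eq by simp
  have c3: "snd (snd (pat n f)) (i, i', c) = snd (snd (pat n g)) (i, i', c)" for i i' c using eq by simp
  have A: "\<forall>i\<in>{..<n}. \<forall>c\<in>D1. (f i < c) = (g i < c) \<and> (c < f i) = (c < g i)"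
  proof (intro ballI)
    fix i c assume "i \<in> {..<n}" "c \<in> D1"
    then show "(f i < c) = (g i < c) \<and> (c < f i) = (c < g i)" using c1[of i c] c2[of i c] by (simp add: pat_def)
  qed
  have B: "\<forall>i\<in>{..<n}. \<forall>i'\<in>{..<n}. \<forall>c\<in>D2. (f i - f i' < c) = (g i - g i' < c)"
  proof (intro ballI)
    fix i i' c assume "i \<in> {..<n}" "i' \<in> {..<n}" "c \<in> D2"
    then show "(f i - f i' < c) = (g i - g i' < c)" using c3[of i i' c] by (simp add: pat_def)
  qed
  show "(\<forall>i\<in>{..<n}. \<forall>c\<in>D1. (f i < c) = (g i < c) \<and> (c < f i) = (c < g i)) \<and>
   (\<forall>i\<in>{..<n}. \<forall>i'\<in>{..<n}. \<forall>c\<in>D2. (f i - f i' < c) = (g i - g i' < c))"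
    using A B by (rule conjI)
next
  assume h: "(\<forall>i\<in>{..<n}. \<forall>c\<in>D1. (f i < c) = (g i < c) \<and> (c < f i) = (c < g i)) \<and>
   (\<forall>i\<in>{..<n}. \<forall>i'\<in>{..<n}. \<forall>c\<in>D2. (f i - f i' < c) = (g i - g i' < c))"
  have "(\<lambda>(i, c). i < n \<and> c \<in> D1 \<and> f i < c) = (\<lambda>(i, c). i < n \<and> c \<in> D1 \<and> g i < c)"
    by (rule ext) (use h in auto)
  moreover have "(\<lambda>(i, c). i < n \<and> c \<in> D1 \<and> c < f i) = (\<lambda>(i, c). i < n \<and> c \<in> D1 \<and> c < g i)"
    by (rule ext) (use h in auto)
  moreover have "(\<lambda>(i, i', c). i < n \<and> i' < n \<and> c \<in> D2 \<and> f i - f i' < c) = (\<lambda>(i, i', c). i < n \<and> i' < n \<and> c \<in> D2 \<and> g i - g i' < c)"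
    by (rule ext) (use h in auto)
  ultimately show "pat n f = pat n g" unfolding pat_def by simp
qed

lemma a_diff: "j \<le> k \<Longrightarrow> j' \<le> k \<Longrightarrow> a j - a j' = (real j - real j') * r0"
  by (simp add: a_def of_nat_diff algebra_simps)

lemma lens_a: "lens r0 k j = {a j <..< real j * r0}"
  by (simp add: lens_def a_def)

lemma pat_inv:
  assumes eq: "pat n f = pat n g"
  shows "Wword r0 k (n, g) = Wword r0 k (n, f)"
    and "W_welldef r0 k (n, g) = W_welldef r0 k (n, f)"
    and "\<And>j. j \<in> {1..k-1} \<Longrightarrow> mcount r0 k j (n, g) = mcount r0 k j (n, f)"
proof -
  have h1: "\<And>i c. i < n \<Longrightarrow> c \<in> D1 \<Longrightarrow> (f i < c) = (g i < c) \<and> (c < f i) = (c < g i)"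
    and h2: "\<And>i i' c. i < n \<Longrightarrow> i' < n \<Longrightarrow> c \<in> D2 \<Longrightarrow> (f i - f i' < c) = (g i - g i' < c)"
    using eq unfolding pat_eq_iff by auto
  have j1: "(1::nat) \<in> {1..k-1}" using k3 by simp
  have z: "0 \<in> D2" unfolding D2_def using j1 by (auto intro!: image_eqI[where x="(1,1)"])
  have E: "f i = f i' \<longleftrightarrow> g i = g i'" if "i < n" "i' < n" for i i'
    using h2[OF that z] h2[OF that(2,1) z] by linarith
  have O: "f i < f i' \<longleftrightarrow> g i < g i'" if "i < n" "i' < n" for i i'
    using h2[OF that z] by linarith
  have L: "f i \<in> lens r0 k j \<longleftrightarrow> g i \<in> lens r0 k j" if "i < n" "j \<in> {1..k-1}" for i j
  proof -
    have "a j \<in> D1" "real j * r0 \<in> D1" using that(2) by (auto simp: D1_def)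
    then show ?thesis using h1[OF that(1)] by (simp add: lens_a)
  qed
  have F: "offset r0 k (f i) \<le> offset r0 k (f i') \<longleftrightarrow> offset r0 k (g i) \<le> offset r0 k (g i')"
    if "i < n" "i' < n" "j \<in> {1..k-1}" "j' \<in> {1..k-1}" "f i \<in> lens r0 k j" "f i' \<in> lens r0 k j'" for i i' j j'
  proof -
    have gi: "g i \<in> lens r0 k j" "g i' \<in> lens r0 k j'" using L that by auto
    have c: "a j' - a j \<in> D2" using that(3,4) a_diff[of j' j] by (auto simp: D2_def intro!: image_eqI[where x="(j', j)"])
    have "offset r0 k (f i) \<le> offset r0 k (f i') \<longleftrightarrow> \<not> (f i' - f i < a j' - a j)"
      using offset_eq[OF that(3,5)] offset_eq[OF that(4,6)] by auto
    also have "\<dots> \<longleftrightarrow> \<not> (g i' - g i < a j' - a j)" using h2[OF that(2,1) c] by simp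
    also have "\<dots> \<longleftrightarrow> offset r0 k (g i) \<le> offset r0 k (g i')"
      using offset_eq[OF that(3) gi(1)] offset_eq[OF that(4) gi(2)] by auto
    finally show ?thesis .
  qed
  define \<phi> where "\<phi> x = g (SOME i. i < n \<and> f i = x)" for x
  have phi: "\<phi> (f i) = g i" if "i < n" for i
  proof -
    have "\<exists>i'. i' < n \<and> f i' = f i" using that by blast
    then have "(SOME i'. i' < n \<and> f i' = f i) < n \<and> f (SOME i'. i' < n \<and> f i' = f i) = f i" by (rule someI_ex)
    then show ?thesis unfolding \<phi>_def using E that by blast
  qed
  have ptsf: "pts (n, f) = f ` {..<n}" and ptsg: "pts (n, g) = g ` {..<n}" by (simp_all add: pts_def)
  have P': "pts (n, g) = \<phi> ` pts (n, f)"
    unfolding ptsf ptsg image_image using phi by (auto intro!: image_cong)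
  have mono: "\<phi> x < \<phi> y" if "x \<in> pts (n, f)" "y \<in> pts (n, f)" "x < y" for x y
    using that O phi unfolding ptsf by auto
  have lens: "\<phi> x \<in> lens r0 k j \<longleftrightarrow> x \<in> lens r0 k j" if "x \<in> pts (n, f)" "j \<in> {1..k-1}" for x j
    using that L phi unfolding ptsf by auto
  have off: "offset r0 k (\<phi> x) \<le> offset r0 k (\<phi> y) \<longleftrightarrow> offset r0 k x \<le> offset r0 k y"
    if "x \<in> lens_pts r0 k (n, f)" "y \<in> lens_pts r0 k (n, f)" for x y
  proof -
    have "x \<in> f ` {..<n}" "\<exists>j\<in>{1..k-1}. x \<in> lens r0 k j"
      "y \<in> f ` {..<n}" "\<exists>j\<in>{1..k-1}. y \<in> lens r0 k j"
      using that unfolding lens_pts_def ptsf by blast+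
    then obtain i j i' j' where i: "i < n" "x = f i" "j \<in> {1..k-1}" "x \<in> lens r0 k j"
      and i': "i' < n" "y = f i'" "j' \<in> {1..k-1}" "y \<in> lens r0 k j'"
      by blast
    show ?thesis using F[OF i(1) i'(1) i(3) i'(3)] i i' phi by simp
  qed
  note T = transfer[OF P' mono lens off]
  show "Wword r0 k (n, g) = Wword r0 k (n, f)" by (rule T(1))
  show "W_welldef r0 k (n, g) = W_welldef r0 k (n, f)" by (rule T(2))
  fix j assume jj: "j \<in> {1..k-1}" show "mcount r0 k j (n, g) = mcount r0 k j (n, f)" using T(3) jj by blast
qed

lemma pat_set_meas: "{g. pat n g = pat n f} \<in> sets PI"
proof -
  have "{g \<in> space PI. (\<forall>i\<in>{..<n}. \<forall>c\<in>D1. (g i < c) = (f i < c) \<and> (c < g i) = (c < f i)) \<and>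
   (\<forall>i\<in>{..<n}. \<forall>i'\<in>{..<n}. \<forall>c\<in>D2. (g i - g i' < c) = (f i - f i' < c))} \<in> sets PI"
    using finD1 finD2 by measurable
  then show ?thesis by (simp add: pat_eq_iff)
qed

lemma pat_range_finite: "finite (range (pat n))"
proof -
  let ?S1 = "(\<lambda>A x. x \<in> A) ` Pow ({..<n} \<times> D1)"
  let ?S3 = "(\<lambda>A x. x \<in> A) ` Pow ({..<n} \<times> {..<n} \<times> D2)"
  have "range (pat n) \<subseteq> ?S1 \<times> ?S1 \<times> ?S3"
  proof
    fix p assume "p \<in> range (pat n)"
    then obtain f where p: "p = pat n f" by blast
    have "fst p = (\<lambda>x. x \<in> {(i, c). i < n \<and> c \<in> D1 \<and> f i < c})" by (auto simp: p pat_def)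
    moreover have "fst (snd p) = (\<lambda>x. x \<in> {(i, c). i < n \<and> c \<in> D1 \<and> c < f i})" by (auto simp: p pat_def)
    moreover have "snd (snd p) = (\<lambda>x. x \<in> {(i, i', c). i < n \<and> i' < n \<and> c \<in> D2 \<and> f i - f i' < c})" by (auto simp: p pat_def)
    ultimately show "p \<in> ?S1 \<times> ?S1 \<times> ?S3"
      unfolding mem_Times_iff by (intro conjI) (rule image_eqI, assumption, force)+
  qed
  then show ?thesis by (rule finite_subset) (simp add: finD1 finD2)
qed

lemma pat_meas:
  assumes inv: "\<And>f g. pat n f = pat n g \<Longrightarrow> Q g = Q f"
  shows "{f. Q f} \<in> sets PI"
proof -
  have "{f. Q f} = (\<Union>p\<in>pat n ` {f. Q f}. {g. pat n g = p})"
  proof (intro equalityI subsetI)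
    fix f assume "f \<in> {f. Q f}" then show "f \<in> (\<Union>p\<in>pat n ` {f. Q f}. {g. pat n g = p})" by blast
  next
    fix g assume "g \<in> (\<Union>p\<in>pat n ` {f. Q f}. {g. pat n g = p})"
    then obtain f where "Q f" "pat n g = pat n f" by blast
    then show "g \<in> {f. Q f}" using inv[of g f] by simp
  qed
  also have "\<dots> \<in> sets PI"
  proof (rule sets.finite_UN)
    show "finite (pat n ` {f. Q f})" using pat_range_finite by (rule finite_subset[rotated]) auto
  qed (auto intro: pat_set_meas)
  finally show ?thesis .
qed

end

context hop begin

lemma xsl_unique:
  assumes set: "set ys = lens_pts r0 k \<omega>" and dis: "distinct ys"
    and ord: "\<And>t t'. t < t' \<Longrightarrow> t' < length ys \<Longrightarrow> offset r0 k (ys ! t') < offset r0 k (ys ! t)"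
  shows "W_welldef r0 k \<omega> \<and> xsl \<omega> = ys"
proof -
  have injk: "inj_on (offset r0 k) (set ys)"
  proof (rule inj_onI)
    fix x y assume "x \<in> set ys" "y \<in> set ys" and eq: "offset r0 k x = offset r0 k y"
    then obtain t t' where t: "t < length ys" "ys ! t = x" "t' < length ys" "ys ! t' = y"
      by (auto simp: in_set_conv_nth)
    show "x = y"
    proof (rule ccontr)
      assume "x \<noteq> y"
      then have "t \<noteq> t'" using t by auto
      then show False using ord[of t t'] ord[of t' t] t eq by (cases "t < t'") auto
    qed
  qed
  then have wd: "W_welldef r0 k \<omega>" using set by (simp add: W_welldef_def)
  let ?key = "\<lambda>x. - offset r0 k x"
  have injkey: "inj_on ?key (set ys)" using injk by (simp add: inj_on_def)
  have s1: "sorted (map ?key ys)"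
    unfolding sorted_iff_nth_mono_less by (auto simp: less_imp_le ord)
  have d1: "distinct (map ?key ys)" using dis injkey by (simp add: distinct_map)
  have s2: "sorted (map ?key (xsl \<omega>))" by (rule xsl_sorted)
  have d2: "distinct (map ?key (xsl \<omega>))" using xsl_distinct injkey xsl_set set by (simp add: distinct_map)
  have "map ?key (xsl \<omega>) = map ?key ys"
    by (rule sorted_distinct_set_unique[OF s2 d2 s1 d1]) (simp add: xsl_set set)
  moreover have "inj_on ?key (set (xsl \<omega>) \<union> set ys)" using injkey by (simp add: xsl_set set)
  ultimately have "xsl \<omega> = ys" by (rule map_inj_on)
  with wd show ?thesis by simp
qed

definition R :: "nat \<Rightarrow> nat \<Rightarrow> (nat \<Rightarrow> nat) \<Rightarrow> nat list \<Rightarrow> (nat \<Rightarrow> real) set" where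
  "R n m \<beta> w = {f. (\<forall>i\<in>{..<n}. \<forall>i'\<in>{..<n}. i \<noteq> i' \<longrightarrow> f i \<noteq> f i')
      \<and> (\<forall>t\<in>{..<m}. f (\<beta> t) \<in> lens r0 k (w ! t))
      \<and> (\<forall>i\<in>{..<n}. i \<notin> \<beta> ` {..<m} \<longrightarrow> (\<forall>j\<in>{1..k-1}. f i \<notin> lens r0 k j))
      \<and> (\<forall>t\<in>{..<m}. \<forall>t'\<in>{..<m}. t < t' \<longrightarrow> f (\<beta> t') - a (w ! t') < f (\<beta> t) - a (w ! t))}"

definition Bset :: "nat \<Rightarrow> nat \<Rightarrow> (nat \<Rightarrow> nat) set" where
  "Bset n m = {\<beta> \<in> {..<m} \<rightarrow>\<^sub>E {..<n}. inj_on \<beta> {..<m}}"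

lemma finite_Bset: "finite (Bset n m)"
  unfolding Bset_def by (rule finite_subset[of _ "{..<m} \<rightarrow>\<^sub>E {..<n}"]) (auto intro: finite_PiE)

lemma R_sub:
  assumes f: "f \<in> R n m \<beta> w" and \<beta>: "\<beta> \<in> Bset n m" and w: "set w \<subseteq> {1..k-1}" "length w = m"
  shows "W_welldef r0 k (n, f) \<and> xsl (n, f) = map (\<lambda>t. f (\<beta> t)) [0..<m]"
proof -
  let ?ys = "map (\<lambda>t. f (\<beta> t)) [0..<m]"
  have injf: "\<And>i i'. i < n \<Longrightarrow> i' < n \<Longrightarrow> f i = f i' \<Longrightarrow> i = i'" using f by (auto simp: R_def)
  have inl: "\<And>t. t < m \<Longrightarrow> f (\<beta> t) \<in> lens r0 k (w ! t)" using f by (auto simp: R_def)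
  have outl: "\<And>i j. i < n \<Longrightarrow> i \<notin> \<beta> ` {..<m} \<Longrightarrow> j \<in> {1..k-1} \<Longrightarrow> f i \<notin> lens r0 k j" using f by (auto simp: R_def)
  have ordf: "\<And>t t'. t < t' \<Longrightarrow> t' < m \<Longrightarrow> f (\<beta> t') - a (w ! t') < f (\<beta> t) - a (w ! t)" using f by (auto simp: R_def)
  have \<beta>n: "\<And>t. t < m \<Longrightarrow> \<beta> t < n" and inj\<beta>: "inj_on \<beta> {..<m}" using \<beta> by (auto simp: Bset_def)
  have wt: "\<And>t. t < m \<Longrightarrow> w ! t \<in> {1..k-1}" using w nth_mem by blast
  have off: "\<And>t. t < m \<Longrightarrow> offset r0 k (f (\<beta> t)) = f (\<beta> t) - a (w ! t)"
    using offset_eq wt inl by blast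
  have "set ?ys = lens_pts r0 k (n, f)"
  proof (intro equalityI subsetI)
    fix x assume "x \<in> set ?ys"
    then obtain t where t: "t < m" "x = f (\<beta> t)" by auto
    then show "x \<in> lens_pts r0 k (n, f)" using inl[OF t(1)] wt[OF t(1)] \<beta>n[OF t(1)]
      by (auto simp: lens_pts_def pts_def)
  next
    fix x assume "x \<in> lens_pts r0 k (n, f)"
    then obtain i j where i: "i < n" "x = f i" "j \<in> {1..k-1}" "x \<in> lens r0 k j"
      by (auto simp: lens_pts_def pts_def)
    then have "i \<in> \<beta> ` {..<m}" using outl by blast
    then show "x \<in> set ?ys" using i by auto
  qed
  moreover have "distinct ?ys"
    unfolding distinct_map using inj\<beta> injf \<beta>n by (auto simp: inj_on_def)
  moreover have "offset r0 k (?ys ! t') < offset r0 k (?ys ! t)" if "t < t'" "t' < length ?ys" for t t'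
    using that ordf[of t t'] off[of t] off[of t'] by simp
  ultimately show ?thesis by (rule xsl_unique)
qed

lemma R_W:
  assumes f: "f \<in> R n m \<beta> w" and \<beta>: "\<beta> \<in> Bset n m" and w: "set w \<subseteq> {1..k-1}" "length w = m"
  shows "Wword r0 k (n, f) = w"
proof -
  have inl: "\<And>t. t < m \<Longrightarrow> f (\<beta> t) \<in> lens r0 k (w ! t)" using f by (auto simp: R_def)
  have wt: "\<And>t. t < m \<Longrightarrow> w ! t \<in> {1..k-1}" using w nth_mem by blast
  show ?thesis using R_sub[OF assms] w(2) lensidx_eq[OF wt inl]
    by (auto simp: Wword_xsl intro!: nth_equalityI)
qed

lemma region_eq:
  assumes w: "set w \<subseteq> {1..k-1}" "length w = m"
  shows "{f. Wword r0 k (n, f) = w \<and> inj_on f {..<n} \<and> W_welldef r0 k (n, f)} = (\<Union>\<beta>\<in>Bset n m. R n m \<beta> w)"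
proof (intro equalityI subsetI)
  fix f assume "f \<in> (\<Union>\<beta>\<in>Bset n m. R n m \<beta> w)"
  then obtain \<beta> where \<beta>: "\<beta> \<in> Bset n m" and f: "f \<in> R n m \<beta> w" by blast
  have "inj_on f {..<n}" using f by (auto simp: R_def inj_on_def)
  then show "f \<in> {f. Wword r0 k (n, f) = w \<and> inj_on f {..<n} \<and> W_welldef r0 k (n, f)}"
    using R_W[OF f \<beta> w] R_sub[OF f \<beta> w] by simp
next
  fix f assume "f \<in> {f. Wword r0 k (n, f) = w \<and> inj_on f {..<n} \<and> W_welldef r0 k (n, f)}"
  then have W: "Wword r0 k (n, f) = w" and inj: "inj_on f {..<n}" and wd: "W_welldef r0 k (n, f)" by auto
  let ?xs = "xsl (n, f)"
  have len: "length ?xs = m" using W w by (metis Wword_xsl length_map)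
  have xw: "\<And>t. t < m \<Longrightarrow> lensidx r0 k (?xs ! t) = w ! t" using W len by (auto simp: Wword_xsl)
  have xp: "\<And>t. t < m \<Longrightarrow> ?xs ! t \<in> lens_pts r0 k (n, f)" using len xsl_set nth_mem by metis
  have xf: "\<And>t. t < m \<Longrightarrow> ?xs ! t \<in> f ` {..<n}" using xp by (auto simp: lens_pts_def pts_def)
  define \<beta> where "\<beta> = restrict (\<lambda>t. the_inv_into {..<n} f (?xs ! t)) {..<m}"
  have \<beta>n: "\<And>t. t < m \<Longrightarrow> \<beta> t < n" unfolding \<beta>_def using the_inv_into_into[OF inj xf] by auto
  have f\<beta>: "\<And>t. t < m \<Longrightarrow> f (\<beta> t) = ?xs ! t" unfolding \<beta>_def using f_the_inv_into_f[OF inj xf] by auto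
  have "\<beta> \<in> Bset n m"
  proof -
    have "inj_on \<beta> {..<m}"
    proof (rule inj_onI)
      fix t t' assume "t \<in> {..<m}" "t' \<in> {..<m}" "\<beta> t = \<beta> t'"
      then have "?xs ! t = ?xs ! t'" using f\<beta> by (metis lessThan_iff)
      then show "t = t'" using xsl_distinct len \<open>t \<in> {..<m}\<close> \<open>t' \<in> {..<m}\<close> by (simp add: nth_eq_iff_index_eq)
    qed
    then show ?thesis using \<beta>n by (auto simp: Bset_def \<beta>_def)
  qed
  moreover have "f \<in> R n m \<beta> w"
  proof -
    have a1: "\<forall>i\<in>{..<n}. \<forall>i'\<in>{..<n}. i \<noteq> i' \<longrightarrow> f i \<noteq> f i'" using inj by (auto simp: inj_on_def)
    have a2: "\<forall>t\<in>{..<m}. f (\<beta> t) \<in> lens r0 k (w ! t)"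
    proof
      fix t assume t: "t \<in> {..<m}"
      then show "f (\<beta> t) \<in> lens r0 k (w ! t)" using lens_pts_lens[OF xp[of t]] xw[of t] f\<beta>[of t] by simp
    qed
    have a3: "\<forall>i\<in>{..<n}. i \<notin> \<beta> ` {..<m} \<longrightarrow> (\<forall>j\<in>{1..k-1}. f i \<notin> lens r0 k j)"
    proof (intro ballI impI)
      fix i j assume i: "i \<in> {..<n}" "i \<notin> \<beta> ` {..<m}" and j: "j \<in> {1..k-1}"
      show "f i \<notin> lens r0 k j"
      proof
        assume "f i \<in> lens r0 k j"
        then have "f i \<in> lens_pts r0 k (n, f)" using i j by (auto simp: lens_pts_def pts_def)
        then obtain t where t: "t < m" "?xs ! t = f i" using xsl_set len by (metis in_set_conv_nth)
        then have "f (\<beta> t) = f i" using f\<beta> by simp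
        then have "\<beta> t = i" using inj \<beta>n[OF t(1)] i(1) by (auto simp: inj_on_def)
        then show False using i t by auto
      qed
    qed
    have a4: "\<forall>t\<in>{..<m}. \<forall>t'\<in>{..<m}. t < t' \<longrightarrow> f (\<beta> t') - a (w ! t') < f (\<beta> t) - a (w ! t)"
    proof (intro ballI impI)
      fix t t' assume t: "t \<in> {..<m}" "t' \<in> {..<m}" "t < t'"
      have "offset r0 k (?xs ! t') < offset r0 k (?xs ! t)" using xsl_strict[OF wd] t len by simp
      moreover have "offset r0 k (?xs ! t) = ?xs ! t - a (w ! t)" "offset r0 k (?xs ! t') = ?xs ! t' - a (w ! t')"
        using lens_pts_lens xp xw t by (metis lessThan_iff offset_eq)+
      ultimately show "f (\<beta> t') - a (w ! t') < f (\<beta> t) - a (w ! t)" using f\<beta> t by simp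
    qed
    show ?thesis using a1 a2 a3 a4 by (simp add: R_def)
  qed
  ultimately show "f \<in> (\<Union>\<beta>\<in>Bset n m. R n m \<beta> w)" by blast
qed

lemma region_disj:
  assumes w: "set w \<subseteq> {1..k-1}" "length w = m"
  shows "disjoint_family_on (\<lambda>\<beta>. R n m \<beta> w) (Bset n m)"
  unfolding disjoint_family_on_def
proof (intro ballI impI)
  fix \<beta> \<beta>' assume b: "\<beta> \<in> Bset n m" "\<beta>' \<in> Bset n m" "\<beta> \<noteq> \<beta>'"
  show "R n m \<beta> w \<inter> R n m \<beta>' w = {}"
  proof (rule ccontr)
    assume "R n m \<beta> w \<inter> R n m \<beta>' w \<noteq> {}"
    then obtain f where f: "f \<in> R n m \<beta> w" "f \<in> R n m \<beta>' w" by blast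
    have "map (\<lambda>t. f (\<beta> t)) [0..<m] = map (\<lambda>t. f (\<beta>' t)) [0..<m]"
      using R_sub[OF f(1) b(1) w] R_sub[OF f(2) b(2) w] by simp
    then have fe: "\<And>t. t < m \<Longrightarrow> f (\<beta> t) = f (\<beta>' t)" by (simp add: map_eq_conv)
    have injf: "\<And>i i'. i < n \<Longrightarrow> i' < n \<Longrightarrow> f i = f i' \<Longrightarrow> i = i'" using f(1) by (auto simp: R_def)
    have "\<beta> = \<beta>'"
    proof (rule extensionalityI[of _ "{..<m}"])
      show "\<beta> \<in> extensional {..<m}" "\<beta>' \<in> extensional {..<m}" using b by (auto simp: Bset_def PiE_def)
      fix t assume t: "t \<in> {..<m}"
      have "\<beta> t < n" "\<beta>' t < n" using b t by (auto simp: Bset_def)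
      then show "\<beta> t = \<beta>' t" using injf fe t by simp
    qed
    with b show False by simp
  qed
qed

end

lemma nth_sub: "set w \<subseteq> A \<Longrightarrow> t < length w \<Longrightarrow> w ! t \<in> A"
  using nth_mem by blast

lemma sw_inv:
  assumes disj: "c1 \<noteq> c2 \<Longrightarrow> {c1<..<c1+w} \<inter> {c2<..<c2+w} = {}"
  shows "sw w c2 c1 (sw w c1 c2 x) = x"
proof (cases "c1 = c2")
  case True then show ?thesis by (simp add: sw_def)
next
  case False
  then have d: "{c1<..<c1+w} \<inter> {c2<..<c2+w} = {}" using disj by simp
  consider "x \<in> {c1<..<c1+w}" | "x \<notin> {c1<..<c1+w}" "x \<in> {c2<..<c2+w}" | "x \<notin> {c1<..<c1+w}" "x \<notin> {c2<..<c2+w}" by blast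
  then show ?thesis
  proof cases
    case 1 then show ?thesis by (simp add: sw_def)
  next
    case 2
    then have y1: "x - c2 + c1 \<in> {c1<..<c1+w}" by auto
    then have y2: "x - c2 + c1 \<notin> {c2<..<c2+w}" using d by blast
    have "sw w c1 c2 x = x - c2 + c1" unfolding sw_def using 2 by (simp only: if_False if_True)
    moreover have "sw w c2 c1 (x - c2 + c1) = x" unfolding sw_def using y1 y2 by (simp only: if_False if_True)
    ultimately show ?thesis by simp
  next
    case 3
    have "sw w c1 c2 x = x" unfolding sw_def using 3 by (simp only: if_False)
    moreover have "sw w c2 c1 x = x" unfolding sw_def using 3 by (simp only: if_False)
    ultimately show ?thesis by simp
  qed
qed

context hop begin

lemma lens_borel[measurable]: "lens r0 k j \<in> sets borel" by (simp add: lens_def)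

lemma lens_I: "j \<in> {1..k-1} \<Longrightarrow> lens r0 k j = {a j <..< a j + \<delta>}"
  by (rule lens_eq) auto

lemma lens_disjI: "j \<in> {1..k-1} \<Longrightarrow> j' \<in> {1..k-1} \<Longrightarrow> a j \<noteq> a j' \<Longrightarrow> {a j <..< a j + \<delta>} \<inter> {a j' <..< a j' + \<delta>} = {}"
  using lens_disj lens_I by (metis disjoint_iff)

lemma sw_lens: "j \<in> {1..k-1} \<Longrightarrow> x \<in> lens r0 k j \<Longrightarrow> sw \<delta> (a j) (a j') x = x - a j + a j'"
  using lens_I by (simp add: sw_def)

lemma sw_pres: "j \<in> {1..k-1} \<Longrightarrow> j' \<in> {1..k-1} \<Longrightarrow> distr U U (sw \<delta> (a j) (a j')) = U"
proof -
  assume j: "j \<in> {1..k-1}" and j': "j' \<in> {1..k-1}"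
  have b: "0 \<le> a j" "a j + \<delta> \<le> 1" if "j \<in> {1..k-1}" for j
  proof -
    have "j \<le> k" "1 \<le> j" using that by auto
    then show "0 \<le> a j" using a_ge[of j] by auto
    have "real j * r0 \<le> real (k - 1) * r0" using that r0_pos by (simp add: mult_right_mono)
    moreover have "j \<le> k" using that by auto
    then have "real (k - j) = real k - real j" by (simp add: of_nat_diff)
    then have "a j + \<delta> = real j * r0" by (simp add: a_def \<delta>_def algebra_simps)
    ultimately show "a j + \<delta> \<le> 1" using k1r0 by simp
  qed
  show ?thesis by (rule sw_preserve) (use b[OF j] b[OF j'] lens_disjI[OF j j'] in auto)
qed

definition hmap :: "nat \<Rightarrow> (nat \<Rightarrow> nat) \<Rightarrow> nat list \<Rightarrow> nat list \<Rightarrow> nat \<Rightarrow> real \<Rightarrow> real" where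
  "hmap m \<beta> w w' i = (if i \<in> \<beta> ` {..<m} then sw \<delta> (a (w ! the_inv_into {..<m} \<beta> i)) (a (w' ! the_inv_into {..<m} \<beta> i)) else (\<lambda>x. x))"

definition Tm :: "nat \<Rightarrow> (nat \<Rightarrow> nat) \<Rightarrow> nat list \<Rightarrow> nat list \<Rightarrow> (nat \<Rightarrow> real) \<Rightarrow> (nat \<Rightarrow> real)" where
  "Tm m \<beta> w w' f = (\<lambda>i. hmap m \<beta> w w' i (f i))"

lemma hmap_beta: "inj_on \<beta> {..<m} \<Longrightarrow> t < m \<Longrightarrow> hmap m \<beta> w w' (\<beta> t) = sw \<delta> (a (w ! t)) (a (w' ! t))"
  by (simp add: hmap_def the_inv_into_f_f)

lemma hmap_out: "i \<notin> \<beta> ` {..<m} \<Longrightarrow> hmap m \<beta> w w' i = (\<lambda>x. x)"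
  by (simp add: hmap_def)

lemma Tm_inv:
  assumes \<beta>: "inj_on \<beta> {..<m}" and w: "set w \<subseteq> {1..k-1}" "length w = m" and w': "set w' \<subseteq> {1..k-1}" "length w' = m"
  shows "Tm m \<beta> w' w (Tm m \<beta> w w' f) = f"
proof
  fix i show "Tm m \<beta> w' w (Tm m \<beta> w w' f) i = f i"
  proof (cases "i \<in> \<beta> ` {..<m}")
    case True
    then obtain t where t: "t < m" "i = \<beta> t" by auto
    have "w ! t \<in> set w" "w' ! t \<in> set w'" using w w' t by simp_all
    then have wt: "w ! t \<in> {1..k-1}" "w' ! t \<in> {1..k-1}" using w(1) w'(1) by auto
    have e1: "Tm m \<beta> w w' f i = sw \<delta> (a (w ! t)) (a (w' ! t)) (f i)"
      unfolding Tm_def t(2) hmap_beta[OF \<beta> t(1)] ..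
    have e2: "Tm m \<beta> w' w g i = sw \<delta> (a (w' ! t)) (a (w ! t)) (g i)" for g
      unfolding Tm_def t(2) hmap_beta[OF \<beta> t(1)] ..
    have "sw \<delta> (a (w' ! t)) (a (w ! t)) (sw \<delta> (a (w ! t)) (a (w' ! t)) (f i)) = f i"
      by (rule sw_inv) (rule lens_disjI[OF wt])
    then show ?thesis using e1 e2 by simp
  next
    case False then show ?thesis by (simp add: Tm_def hmap_out)
  qed
qed

lemma Tm_R:
  assumes f: "f \<in> R n m \<beta> w" and \<beta>: "\<beta> \<in> Bset n m"
    and w: "set w \<subseteq> {1..k-1}" "length w = m" and w': "set w' \<subseteq> {1..k-1}" "length w' = m"
  shows "Tm m \<beta> w w' f \<in> R n m \<beta> w'"
proof -
  let ?g = "Tm m \<beta> w w' f"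
  have injf: "\<And>i i'. i < n \<Longrightarrow> i' < n \<Longrightarrow> f i = f i' \<Longrightarrow> i = i'" using f by (auto simp: R_def)
  have inl: "\<And>t. t < m \<Longrightarrow> f (\<beta> t) \<in> lens r0 k (w ! t)" using f by (auto simp: R_def)
  have outl: "\<And>i j. i < n \<Longrightarrow> i \<notin> \<beta> ` {..<m} \<Longrightarrow> j \<in> {1..k-1} \<Longrightarrow> f i \<notin> lens r0 k j" using f by (auto simp: R_def)
  have ordf: "\<And>t t'. t < t' \<Longrightarrow> t' < m \<Longrightarrow> f (\<beta> t') - a (w ! t') < f (\<beta> t) - a (w ! t)" using f by (auto simp: R_def)
  have \<beta>n: "\<And>t. t < m \<Longrightarrow> \<beta> t < n" and inj\<beta>: "inj_on \<beta> {..<m}" using \<beta> by (auto simp: Bset_def)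
  have wt: "\<And>t. t < m \<Longrightarrow> w ! t \<in> {1..k-1}" using w nth_sub by metis
  have wt': "\<And>t. t < m \<Longrightarrow> w' ! t \<in> {1..k-1}" using w' nth_sub by metis
  have gb: "?g (\<beta> t) = f (\<beta> t) - a (w ! t) + a (w' ! t)" if "t < m" for t
    using hmap_beta[OF inj\<beta> that] sw_lens[OF wt[OF that] inl[OF that]] by (simp add: Tm_def)
  have go: "?g i = f i" if "i \<notin> \<beta> ` {..<m}" for i
    using hmap_out[OF that] by (simp add: Tm_def)
  have gl: "?g (\<beta> t) \<in> lens r0 k (w' ! t)" if "t < m" for t
    using gb[OF that] inl[OF that] lens_I[OF wt[OF that]] lens_I[OF wt'[OF that]] by auto
  have a1: "\<forall>i\<in>{..<n}. \<forall>i'\<in>{..<n}. i \<noteq> i' \<longrightarrow> ?g i \<noteq> ?g i'"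
  proof (intro ballI impI)
    fix i i' assume i: "i \<in> {..<n}" "i' \<in> {..<n}" "i \<noteq> i'"
    show "?g i \<noteq> ?g i'"
    proof (cases "i \<in> \<beta> ` {..<m}")
      case True
      then obtain t where t: "t < m" "i = \<beta> t" by auto
      show ?thesis
      proof (cases "i' \<in> \<beta> ` {..<m}")
        case True
        then obtain t' where t': "t' < m" "i' = \<beta> t'" by auto
        have tt: "t \<noteq> t'" using t t' i by auto
        show ?thesis
        proof
          assume eq: "?g i = ?g i'"
          then have "?g (\<beta> t) \<in> lens r0 k (w' ! t')" using gl[OF t'(1)] t t' by simp
          then have "w' ! t = w' ! t'" using lens_disj[OF wt'[OF t(1)] wt'[OF t'(1)]] gl[OF t(1)] by simp
          then have "f (\<beta> t) - a (w ! t) = f (\<beta> t') - a (w ! t')" using eq gb t t' by simp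
          then show False using ordf[of t t'] ordf[of t' t] tt t t' by (cases "t < t'") auto
        qed
      next
        case False
        have "?g i' \<notin> lens r0 k (w' ! t)" using go[OF False] outl[OF _ False wt'[OF t(1)]] i by simp
        then show ?thesis using gl[OF t(1)] t by auto
      qed
    next
      case False
      note F1 = False
      show ?thesis
      proof (cases "i' \<in> \<beta> ` {..<m}")
        case True
        then obtain t' where t': "t' < m" "i' = \<beta> t'" by auto
        have "?g i \<notin> lens r0 k (w' ! t')" using go[OF F1] outl[OF _ F1 wt'[OF t'(1)]] i by simp
        then show ?thesis using gl[OF t'(1)] t' by auto
      next
        case False
        then show ?thesis using go[OF F1] go[OF False] injf i by auto
      qed
    qed
  qed
  have a2: "\<forall>t\<in>{..<m}. ?g (\<beta> t) \<in> lens r0 k (w' ! t)" using gl by simp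
  have a3: "\<forall>i\<in>{..<n}. i \<notin> \<beta> ` {..<m} \<longrightarrow> (\<forall>j\<in>{1..k-1}. ?g i \<notin> lens r0 k j)"
    using go outl by simp
  have a4: "\<forall>t\<in>{..<m}. \<forall>t'\<in>{..<m}. t < t' \<longrightarrow> ?g (\<beta> t') - a (w' ! t') < ?g (\<beta> t) - a (w' ! t)"
    using gb ordf by simp
  show ?thesis using a1 a2 a3 a4 by (simp add: R_def)
qed

lemma R_meas: "R n m \<beta> w \<in> sets PI"
proof -
  have "{f \<in> space PI. (\<forall>i\<in>{..<n}. \<forall>i'\<in>{..<n}-{i}. f i < f i' \<or> f i' < f i)
      \<and> (\<forall>t\<in>{..<m}. f (\<beta> t) \<in> lens r0 k (w ! t))
      \<and> (\<forall>i\<in>{..<n} - \<beta> ` {..<m}. \<forall>j\<in>{1..k-1}. f i \<notin> lens r0 k j)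
      \<and> (\<forall>t\<in>{..<m}. \<forall>t'\<in>{t<..<m}. f (\<beta> t') - a (w ! t') < f (\<beta> t) - a (w ! t))} \<in> sets PI"
    by measurable
  also have "{f \<in> space PI. (\<forall>i\<in>{..<n}. \<forall>i'\<in>{..<n}-{i}. f i < f i' \<or> f i' < f i)
      \<and> (\<forall>t\<in>{..<m}. f (\<beta> t) \<in> lens r0 k (w ! t))
      \<and> (\<forall>i\<in>{..<n} - \<beta> ` {..<m}. \<forall>j\<in>{1..k-1}. f i \<notin> lens r0 k j)
      \<and> (\<forall>t\<in>{..<m}. \<forall>t'\<in>{t<..<m}. f (\<beta> t') - a (w ! t') < f (\<beta> t) - a (w ! t))} = R n m \<beta> w"
    unfolding R_def space_PI Diff_iff greaterThanLessThan_iff Ball_def linorder_neq_iff[symmetric] insert_iff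
    by (simp add: conj_commute imp_conjL) (intro Collect_cong conj_cong refl; blast)
  finally show ?thesis .
qed

lemma hmap_meas: "hmap m \<beta> w w' i \<in> borel_measurable borel"
  by (simp add: hmap_def sw_meas)

lemma hmap_pres:
  assumes w: "set w \<subseteq> {1..k-1}" "length w = m" and w': "set w' \<subseteq> {1..k-1}" "length w' = m"
    and inj: "inj_on \<beta> {..<m}"
  shows "distr U U (hmap m \<beta> w w' i) = U"
proof (cases "i \<in> \<beta> ` {..<m}")
  case True
  let ?t = "the_inv_into {..<m} \<beta> i"
  have "?t \<in> {..<m}" by (rule the_inv_into_into[OF inj True subset_refl])
  then have "w ! ?t \<in> {1..k-1}" "w' ! ?t \<in> {1..k-1}" using w w' nth_sub by (metis lessThan_iff)+
  then show ?thesis using sw_pres True by (simp add: hmap_def)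
next
  case False
  have "distr U U (\<lambda>x. x) = U" using distr_id[of U] by (simp add: id_def)
  then show ?thesis using False by (simp add: hmap_def)
qed

end

abbreviation Mp :: "real \<Rightarrow> nat measure" where "Mp lam \<equiv> measure_pmf (poisson_pmf lam)"

lemma PPP_eq: "PPP lam = Mp lam \<Otimes>\<^sub>M PI" by (simp add: PPP_def U_def)

lemma space_PPP[simp]: "space (PPP lam) = UNIV" by (simp add: PPP_eq space_pair_measure)

interpretation PPPp: pair_prob_space "Mp lam" PI for lam
  by (simp add: pair_prob_space_def pair_sigma_finite_def prob_space_measure_pmf prob_space_imp_sigma_finite PIp.P.prob_space_axioms)

lemma PPP_prob: "prob_space (PPP lam)"
  unfolding PPP_eq by (rule PPPp.P.prob_space_axioms)

lemma PPP_sets: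
  assumes "\<And>n. {f. Q n f} \<in> sets PI"
  shows "{\<omega> \<in> space (PPP lam). Q (fst \<omega>) (snd \<omega>)} \<in> sets (PPP lam)"
proof -
  have "{\<omega> \<in> space (PPP lam). Q (fst \<omega>) (snd \<omega>)} = (\<Union>n. {n} \<times> {f. Q n f})" by auto
  also have "\<dots> \<in> sets (PPP lam)" unfolding PPP_eq
    by (intro sets.countable_UN subsetI) (auto intro!: pair_measureI assms)
  finally show ?thesis .
qed

lemma PPP_emeasure:
  assumes "\<And>n. {f. Q n f} \<in> sets PI"
  shows "emeasure (PPP lam) {\<omega> \<in> space (PPP lam). Q (fst \<omega>) (snd \<omega>)} = (\<integral>\<^sup>+n. emeasure PI {f. Q n f} \<partial>Mp lam)"
proof -
  have S: "{\<omega> \<in> space (PPP lam). Q (fst \<omega>) (snd \<omega>)} \<in> sets (Mp lam \<Otimes>\<^sub>M PI)"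
    using PPP_sets[OF assms] by (simp add: PPP_eq)
  have "emeasure (Mp lam \<Otimes>\<^sub>M PI) {\<omega> \<in> space (PPP lam). Q (fst \<omega>) (snd \<omega>)} = (\<integral>\<^sup>+n. emeasure PI (Pair n -` {\<omega> \<in> space (PPP lam). Q (fst \<omega>) (snd \<omega>)}) \<partial>Mp lam)"
    by (rule PIp.P.emeasure_pair_measure_alt[OF S])
  then show ?thesis by (simp add: PPP_eq space_pair_measure)
qed

context hop begin

definition Nset :: "nat \<Rightarrow> (nat \<Rightarrow> real) set" where
  "Nset n = (\<Union>i\<in>{..<n}. \<Union>i'\<in>{..<n}-{i}. \<Union>c\<in>D2. {f. f i - f i' = c})"

lemma Nset_null: "Nset n \<in> null_sets PI"
  unfolding Nset_def
  by (intro null_sets_UN' countable_finite finite_lessThan finite_Diff finD2) (auto intro: null_diff)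

definition good :: "nat \<Rightarrow> (nat \<Rightarrow> real) \<Rightarrow> bool" where
  "good n f \<longleftrightarrow> inj_on f {..<n} \<and> W_welldef r0 k (n, f)"

lemma bad_Nset: "\<not> good n f \<Longrightarrow> f \<in> Nset n"
proof -
  assume ng: "\<not> good n f"
  have j1: "(1::nat) \<in> {1..k-1}" using k3 by simp
  have z: "0 \<in> D2" unfolding D2_def using j1 by (auto intro!: image_eqI[where x="(1,1)"])
  show ?thesis
  proof (cases "inj_on f {..<n}")
    case False
    then obtain i i' where "i < n" "i' < n" "i \<noteq> i'" "f i = f i'" by (auto simp: inj_on_def)
    then show ?thesis using z unfolding Nset_def by fastforce
  next
    case True
    then have "\<not> W_welldef r0 k (n, f)" using ng by (simp add: good_def)
    then obtain x y where xy: "x \<in> lens_pts r0 k (n, f)" "y \<in> lens_pts r0 k (n, f)" "x \<noteq> y"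
      "offset r0 k x = offset r0 k y" by (auto simp: W_welldef_def inj_on_def)
    obtain i i' where ii: "i < n" "x = f i" "i' < n" "y = f i'"
      using xy(1,2) by (auto simp: lens_pts_def pts_def)
    have ne: "i \<noteq> i'" using ii xy(3) by auto
    let ?j = "lensidx r0 k x" and ?j' = "lensidx r0 k y"
    have lj: "x \<in> lens r0 k ?j" "?j \<in> {1..k-1}" "y \<in> lens r0 k ?j'" "?j' \<in> {1..k-1}"
      using lens_pts_lens xy by blast+
    have "x - a ?j = y - a ?j'" using offset_eq[OF lj(2,1)] offset_eq[OF lj(4,3)] xy(4) by simp
    moreover have "?j \<le> k" "?j' \<le> k" using lj by auto
    then have "a ?j - a ?j' = (real ?j - real ?j') * r0" by (rule a_diff)
    ultimately have "f i - f i' = (real ?j - real ?j') * r0" using ii by simp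
    moreover have "(real ?j - real ?j') * r0 \<in> D2" using lj unfolding D2_def by force
    ultimately show ?thesis using ii ne unfolding Nset_def by fastforce
  qed
qed

lemma inj_meas: "{f. inj_on f {..<n}} \<in> sets PI"
proof -
  have "{f \<in> space PI. \<forall>i\<in>{..<n}. \<forall>i'\<in>{..<n}-{i}. f i < f i' \<or> f i' < f i} \<in> sets PI" by measurable
  also have "{f \<in> space PI. \<forall>i\<in>{..<n}. \<forall>i'\<in>{..<n}-{i}. f i < f i' \<or> f i' < f i} = {f. inj_on f {..<n}}"
  proof (intro set_eqI iffI CollectI)
    fix f assume "f \<in> {f \<in> space PI. \<forall>i\<in>{..<n}. \<forall>i'\<in>{..<n}-{i}. f i < f i' \<or> f i' < f i}"
    then have h: "\<And>i i'. i < n \<Longrightarrow> i' < n \<Longrightarrow> i \<noteq> i' \<Longrightarrow> f i < f i' \<or> f i' < f i" by auto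
    show "inj_on f {..<n}"
    proof (rule inj_onI)
      fix i i' assume "i \<in> {..<n}" "i' \<in> {..<n}" "f i = f i'"
      then show "i = i'" using h[of i i'] by auto
    qed
  next
    fix f :: "nat \<Rightarrow> real" assume "f \<in> {f. inj_on f {..<n}}"
    then have h: "\<And>i i'. i < n \<Longrightarrow> i' < n \<Longrightarrow> i \<noteq> i' \<Longrightarrow> f i \<noteq> f i'" by (auto simp: inj_on_def)
    show "f \<in> space PI \<and> (\<forall>i\<in>{..<n}. \<forall>i'\<in>{..<n}-{i}. f i < f i' \<or> f i' < f i)"
    proof (intro conjI ballI)
      show "f \<in> space PI" by simp
      fix i i' assume "i \<in> {..<n}" "i' \<in> {..<n} - {i}"
      then have "f i \<noteq> f i'" using h[of i i'] by auto
      then show "f i < f i' \<or> f i' < f i" by (rule linorder_neq_iff[THEN iffD1])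
    qed
  qed
  finally show ?thesis .
qed

lemma welldef_meas: "{f. W_welldef r0 k (n, f)} \<in> sets PI"
  by (rule pat_meas) (rule pat_inv(2))

lemma good_meas: "{f. good n f} \<in> sets PI"
proof -
  have "{f. good n f} = {f. inj_on f {..<n}} \<inter> {f. W_welldef r0 k (n, f)}" by (auto simp: good_def)
  then show ?thesis using inj_meas welldef_meas by simp
qed

lemma AE_good_PI: "AE f in PI. good n f"
  by (rule AE_I'[OF Nset_null]) (auto intro: bad_Nset)

lemma AE_good: "AE \<omega> in PPP lam. good (fst \<omega>) (snd \<omega>)"
proof (rule AE_I')
  let ?N = "{\<omega> \<in> space (PPP lam). snd \<omega> \<in> Nset (fst \<omega>)}"
  have Ns: "\<And>n. {f. f \<in> Nset n} \<in> sets PI" using Nset_null by auto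
  have "emeasure (PPP lam) ?N = (\<integral>\<^sup>+n. emeasure PI {f. f \<in> Nset n} \<partial>Mp lam)"
    by (rule PPP_emeasure[OF Ns])
  also have "\<dots> = 0" by (simp add: null_setsD1[OF Nset_null])
  finally show "?N \<in> null_sets (PPP lam)" using PPP_sets[OF Ns] by (simp add: null_sets_def)
  show "{\<omega> \<in> space (PPP lam). \<not> good (fst \<omega>) (snd \<omega>)} \<subseteq> ?N" using bad_Nset by auto
qed

lemma AE_welldef: "AE \<omega> in PPP lam. W_welldef r0 k \<omega>"
  using AE_good by eventually_elim (auto simp: good_def)

end

lemma PPP_sets':
  assumes "\<And>n. {f. P (n, f)} \<in> sets PI"
  shows "{\<omega> \<in> space (PPP lam). P \<omega>} \<in> sets (PPP lam)"
  using PPP_sets[of "\<lambda>n f. P (n, f)" lam] assms by simp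

lemma PPP_emeasure':
  assumes "\<And>n. {f. P (n, f)} \<in> sets PI"
  shows "emeasure (PPP lam) {\<omega> \<in> space (PPP lam). P \<omega>} = (\<integral>\<^sup>+n. emeasure PI {f. P (n, f)} \<partial>Mp lam)"
  using PPP_emeasure[of "\<lambda>n f. P (n, f)" lam] assms by simp

context hop begin

lemma C_meas_PI: "{f. \<forall>j\<in>{1..k-1}. mcount r0 k j (n, f) = M j} \<in> sets PI"
proof (rule pat_meas)
  fix f g assume "pat n f = pat n g"
  then have "\<And>j. j \<in> {1..k-1} \<Longrightarrow> mcount r0 k j (n, g) = mcount r0 k j (n, f)" by (rule pat_inv(3))
  then show "(\<forall>j\<in>{1..k-1}. mcount r0 k j (n, g) = M j) = (\<forall>j\<in>{1..k-1}. mcount r0 k j (n, f) = M j)" by simp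
qed

lemma W_meas_PI: "{f. Wword r0 k (n, f) = w} \<in> sets PI"
proof (rule pat_meas)
  fix f g assume "pat n f = pat n g"
  then have "Wword r0 k (n, g) = Wword r0 k (n, f)" by (rule pat_inv(1))
  then show "(Wword r0 k (n, g) = w) = (Wword r0 k (n, f) = w)" by simp
qed

lemma words_length: "w \<in> words M (k - 1) \<Longrightarrow> length w = (\<Sum>j\<in>{1..k-1}. M j)"
  using sum_count_set[of w "{1..k-1}"] by (simp add: words_def)

lemma words_finite: "finite (words M (k - 1))"
proof -
  have "words M (k - 1) \<subseteq> {xs. set xs \<subseteq> {1..k-1} \<and> length xs = (\<Sum>j\<in>{1..k-1}. M j)}"
    using words_length by (auto simp: words_def)
  then show ?thesis by (rule finite_subset) (rule finite_lists_length_eq, simp)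
qed

lemma W_in_words: "\<forall>j\<in>{1..k-1}. mcount r0 k j \<omega> = M j \<Longrightarrow> Wword r0 k \<omega> \<in> words M (k - 1)"
proof -
  assume C: "\<forall>j\<in>{1..k-1}. mcount r0 k j \<omega> = M j"
  have "set (Wword r0 k \<omega>) \<subseteq> {1..k-1}"
  proof
    fix j assume "j \<in> set (Wword r0 k \<omega>)"
    then obtain x where x: "x \<in> set (xsl \<omega>)" "j = lensidx r0 k x" by (auto simp: Wword_xsl)
    then have "x \<in> lens_pts r0 k \<omega>" by (simp add: xsl_set)
    then show "j \<in> {1..k-1}" using lens_pts_lens x(2) by blast
  qed
  then show ?thesis using C count_W by (simp add: words_def)
qed

lemma words_C: "w \<in> words M (k - 1) \<Longrightarrow> Wword r0 k \<omega> = w \<Longrightarrow> \<forall>j\<in>{1..k-1}. mcount r0 k j \<omega> = M j"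
proof
  fix j assume w: "w \<in> words M (k - 1)" and W: "Wword r0 k \<omega> = w" and j: "j \<in> {1..k-1}"
  have "mcount r0 k j \<omega> = count_list (Wword r0 k \<omega>) j" using count_W[OF j] by simp
  also have "\<dots> = M j" using w W j by (simp add: words_def)
  finally show "mcount r0 k j \<omega> = M j" .
qed

lemma R_eq:
  assumes \<beta>: "\<beta> \<in> Bset n m" and w: "set w \<subseteq> {1..k-1}" "length w = m" and w': "set w' \<subseteq> {1..k-1}" "length w' = m"
  shows "emeasure PI (R n m \<beta> w) = emeasure PI (R n m \<beta> w')"
proof -
  have inj: "inj_on \<beta> {..<m}" using \<beta> by (simp add: Bset_def)
  let ?T = "\<lambda>f i. hmap m \<beta> w w' i (f i)"
  have D: "distr PI PI ?T = PI"
    by (rule PI_coord_map) (auto intro: hmap_meas hmap_pres[OF w w' inj])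
  have Tm: "?T \<in> measurable PI PI" by (rule coord_map_meas) (rule hmap_meas)
  have pre: "?T -` R n m \<beta> w' \<inter> space PI = R n m \<beta> w"
  proof (intro equalityI subsetI)
    fix f assume "f \<in> ?T -` R n m \<beta> w' \<inter> space PI"
    then have "Tm m \<beta> w w' f \<in> R n m \<beta> w'" by (simp add: Tm_def)
    then have "Tm m \<beta> w' w (Tm m \<beta> w w' f) \<in> R n m \<beta> w" by (rule Tm_R[OF _ \<beta> w' w])
    then show "f \<in> R n m \<beta> w" using Tm_inv[OF inj w w'] by simp
  next
    fix f assume "f \<in> R n m \<beta> w"
    then have "Tm m \<beta> w w' f \<in> R n m \<beta> w'" by (rule Tm_R[OF _ \<beta> w w'])
    then show "f \<in> ?T -` R n m \<beta> w' \<inter> space PI" by (simp add: Tm_def)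
  qed
  have "emeasure PI (R n m \<beta> w') = emeasure (distr PI PI ?T) (R n m \<beta> w')" using D by simp
  also have "\<dots> = emeasure PI (?T -` R n m \<beta> w' \<inter> space PI)" by (rule emeasure_distr[OF Tm R_meas])
  finally show ?thesis using pre by simp
qed

lemma PI_W_sum:
  assumes w: "set w \<subseteq> {1..k-1}" "length w = m"
  shows "emeasure PI {f. Wword r0 k (n, f) = w} = (\<Sum>\<beta>\<in>Bset n m. emeasure PI (R n m \<beta> w))"
proof -
  have "emeasure PI {f. Wword r0 k (n, f) = w} = emeasure PI {f. Wword r0 k (n, f) = w \<and> inj_on f {..<n} \<and> W_welldef r0 k (n, f)}"
  proof (rule emeasure_eq_AE)
    show "AE f in PI. (f \<in> {f. Wword r0 k (n, f) = w}) = (f \<in> {f. Wword r0 k (n, f) = w \<and> inj_on f {..<n} \<and> W_welldef r0 k (n, f)})"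
      using AE_good_PI[of n] by eventually_elim (auto simp: good_def)
    show "{f. Wword r0 k (n, f) = w} \<in> sets PI" by (rule W_meas_PI)
    have "{f. Wword r0 k (n, f) = w \<and> inj_on f {..<n} \<and> W_welldef r0 k (n, f)} = {f. Wword r0 k (n, f) = w} \<inter> {f. good n f}"
      by (auto simp: good_def)
    then show "{f. Wword r0 k (n, f) = w \<and> inj_on f {..<n} \<and> W_welldef r0 k (n, f)} \<in> sets PI"
      using W_meas_PI good_meas by simp
  qed
  also have "\<dots> = emeasure PI (\<Union>\<beta>\<in>Bset n m. R n m \<beta> w)" by (simp add: region_eq[OF w])
  also have "\<dots> = (\<Sum>\<beta>\<in>Bset n m. emeasure PI (R n m \<beta> w))"
    by (rule sum_emeasure[symmetric]) (auto intro: R_meas region_disj[OF w] finite_Bset)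
  finally show ?thesis .
qed

lemma PPP_W_eq:
  assumes w: "w \<in> words M (k - 1)" and w': "w' \<in> words M (k - 1)"
  shows "emeasure (PPP lam) {\<omega> \<in> space (PPP lam). Wword r0 k \<omega> = w} = emeasure (PPP lam) {\<omega> \<in> space (PPP lam). Wword r0 k \<omega> = w'}"
proof -
  let ?m = "\<Sum>j\<in>{1..k-1}. M j"
  have ws: "set w \<subseteq> {1..k-1}" "length w = ?m" "set w' \<subseteq> {1..k-1}" "length w' = ?m"
    using w w' words_length by (auto simp: words_def)
  have "emeasure PI {f. Wword r0 k (n, f) = w} = emeasure PI {f. Wword r0 k (n, f) = w'}" for n
    unfolding PI_W_sum[OF ws(1,2)] PI_W_sum[OF ws(3,4)]
    by (rule sum.cong[OF refl]) (rule R_eq[OF _ ws])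
  moreover have "emeasure (PPP lam) {\<omega> \<in> space (PPP lam). Wword r0 k \<omega> = v} = (\<integral>\<^sup>+n. emeasure PI {f. Wword r0 k (n, f) = v} \<partial>Mp lam)" for v
    by (rule PPP_emeasure'[OF W_meas_PI])
  ultimately show ?thesis by presburger
qed

lemma part2:
  assumes pos: "\<P>(\<omega> in PPP lam. \<forall>j\<in>{1..k-1}. mcount r0 k j \<omega> = M j) > 0"
  shows "\<P>(\<omega> in PPP lam. W_welldef r0 k \<omega> \<bar> \<forall>j\<in>{1..k-1}. mcount r0 k j \<omega> = M j) = 1
         \<and> (\<forall>w\<in>words M (k - 1).
             \<P>(\<omega> in PPP lam. Wword r0 k \<omega> = w \<bar> \<forall>j\<in>{1..k-1}. mcount r0 k j \<omega> = M j)
               = 1 / real (card (words M (k - 1))))"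
proof -
  interpret P: prob_space "PPP lam" by (rule PPP_prob)
  let ?C = "{\<omega> \<in> space (PPP lam). \<forall>j\<in>{1..k-1}. mcount r0 k j \<omega> = M j}"
  let ?S = "\<lambda>w. {\<omega> \<in> space (PPP lam). Wword r0 k \<omega> = w}"
  have Cm: "?C \<in> sets (PPP lam)" by (rule PPP_sets') (rule C_meas_PI)
  have Sm: "?S w \<in> sets (PPP lam)" for w by (rule PPP_sets') (rule W_meas_PI)
  have part_a: "\<P>(\<omega> in PPP lam. W_welldef r0 k \<omega> \<bar> \<forall>j\<in>{1..k-1}. mcount r0 k j \<omega> = M j) = 1"
  proof -
    have "\<P>(\<omega> in PPP lam. W_welldef r0 k \<omega> \<and> (\<forall>j\<in>{1..k-1}. mcount r0 k j \<omega> = M j)) = P.prob ?C"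
    proof (rule measure_eq_AE)
      show "AE x in PPP lam. (x \<in> {\<omega> \<in> space (PPP lam). W_welldef r0 k \<omega> \<and> (\<forall>j\<in>{1..k-1}. mcount r0 k j \<omega> = M j)}) = (x \<in> ?C)"
        using AE_welldef[of lam] by eventually_elim auto
      have "{\<omega> \<in> space (PPP lam). W_welldef r0 k \<omega> \<and> (\<forall>j\<in>{1..k-1}. mcount r0 k j \<omega> = M j)}
          = {\<omega> \<in> space (PPP lam). W_welldef r0 k \<omega>} \<inter> ?C" by auto
      moreover have "{\<omega> \<in> space (PPP lam). W_welldef r0 k \<omega>} \<in> sets (PPP lam)"
        by (rule PPP_sets') (rule welldef_meas)
      ultimately show "{\<omega> \<in> space (PPP lam). W_welldef r0 k \<omega> \<and> (\<forall>j\<in>{1..k-1}. mcount r0 k j \<omega> = M j)} \<in> sets (PPP lam)"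
        using Cm by simp
    qed (rule Cm)
    then show ?thesis using pos by (simp add: cond_prob_def)
  qed
  have part_b: "\<P>(\<omega> in PPP lam. Wword r0 k \<omega> = w \<bar> \<forall>j\<in>{1..k-1}. mcount r0 k j \<omega> = M j) = 1 / real (card (words M (k - 1)))"
    if w: "w \<in> words M (k - 1)" for w
  proof -
    have Ceq: "?C = (\<Union>v\<in>words M (k - 1). ?S v)"
      using W_in_words words_C by auto
    have pv: "P.prob (?S v) = P.prob (?S w)" if "v \<in> words M (k - 1)" for v
      unfolding measure_def using PPP_W_eq[OF that w, of lam] by simp
    have "P.prob ?C = (\<Sum>v\<in>words M (k - 1). P.prob (?S v))"
      unfolding Ceq
    proof (rule measure_finite_Union)
      show "finite (words M (k - 1))" by (rule words_finite)
      show "?S ` words M (k - 1) \<subseteq> sets (PPP lam)" using Sm by auto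
      show "disjoint_family_on ?S (words M (k - 1))" by (auto simp: disjoint_family_on_def)
    qed (simp add: P.emeasure_eq_measure)
    also have "\<dots> = real (card (words M (k - 1))) * P.prob (?S w)" using pv by simp
    finally have PC: "P.prob ?C = real (card (words M (k - 1))) * P.prob (?S w)" .
    have "\<P>(\<omega> in PPP lam. Wword r0 k \<omega> = w \<and> (\<forall>j\<in>{1..k-1}. mcount r0 k j \<omega> = M j)) = P.prob (?S w)"
      using words_C[OF w] by (intro arg_cong[where f="P.prob"]) auto
    moreover have "real (card (words M (k - 1))) * P.prob (?S w) > 0" using PC pos by simp
    then have "real (card (words M (k - 1))) \<noteq> 0" "P.prob (?S w) \<noteq> 0" by (metis mult_zero_left less_irrefl, metis mult_zero_right less_irrefl)
    ultimately show ?thesis using PC by (simp add: cond_prob_def)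
  qed
  show ?thesis using part_a part_b by blast
qed

end

theorem mainTheorem5:
  fixes lam r0 :: real and k :: nat
  assumes "lam > 0" and "k \<ge> 3"
    and "1 / real k < r0" and "r0 < 1 / real (k - 1)"
  shows "(\<forall>\<omega>\<in>space (PPP lam). \<forall>vs\<in>khop_paths r0 k \<omega>.
             \<forall>j\<in>{1..k-1}. vs ! j \<in> lens r0 k j)
    \<and> (\<forall>M :: nat \<Rightarrow> nat.
         \<P>(\<omega> in PPP lam. \<forall>j\<in>{1..k-1}. mcount r0 k j \<omega> = M j) > 0 \<longrightarrow>
           \<P>(\<omega> in PPP lam. W_welldef r0 k \<omega> \<bar> \<forall>j\<in>{1..k-1}. mcount r0 k j \<omega> = M j) = 1
         \<and> (\<forall>w\<in>words M (k - 1).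
             \<P>(\<omega> in PPP lam. Wword r0 k \<omega> = w \<bar> \<forall>j\<in>{1..k-1}. mcount r0 k j \<omega> = M j)
               = 1 / real (card (words M (k - 1)))))
    \<and> (AE \<omega> in PPP lam.
         sigma r0 k \<omega> = card (emb_tuples (Wword r0 k \<omega>) (k - 1))
       \<and> sigma r0 k \<omega> =
           (\<Sum>s = 1..mcount r0 k (k - 1) \<omega>.
              S_t (k - 2) (pi_ij (k - 2) (k - 1) (Wword r0 k \<omega>) s)
                  (filter (\<lambda>a. a \<noteq> k - 1) (Wword r0 k \<omega>))))"
proof -
  interpret hop r0 k by unfold_locales (use assms in auto)
  have A: "\<forall>\<omega>\<in>space (PPP lam). \<forall>vs\<in>khop_paths r0 k \<omega>. \<forall>j\<in>{1..k-1}. vs ! j \<in> lens r0 k j"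
    using part1 by blast
  have B: "\<forall>M :: nat \<Rightarrow> nat.
         \<P>(\<omega> in PPP lam. \<forall>j\<in>{1..k-1}. mcount r0 k j \<omega> = M j) > 0 \<longrightarrow>
           \<P>(\<omega> in PPP lam. W_welldef r0 k \<omega> \<bar> \<forall>j\<in>{1..k-1}. mcount r0 k j \<omega> = M j) = 1
         \<and> (\<forall>w\<in>words M (k - 1).
             \<P>(\<omega> in PPP lam. Wword r0 k \<omega> = w \<bar> \<forall>j\<in>{1..k-1}. mcount r0 k j \<omega> = M j)
               = 1 / real (card (words M (k - 1))))"
    using part2 by blast
  have C: "AE \<omega> in PPP lam.
         sigma r0 k \<omega> = card (emb_tuples (Wword r0 k \<omega>) (k - 1))
       \<and> sigma r0 k \<omega> =
           (\<Sum>s = 1..mcount r0 k (k - 1) \<omega>.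
              S_t (k - 2) (pi_ij (k - 2) (k - 1) (Wword r0 k \<omega>) s)
                  (filter (\<lambda>a. a \<noteq> k - 1) (Wword r0 k \<omega>)))"
    using AE_welldef[of lam] by eventually_elim (rule part3_det)
  show ?thesis using A B C by blast
qed

end
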